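(* Let $n\ge1$ and $\mathbf{P}_A,\mathbf{P}_B,\mathbf{Q}_A,\mathbf{Q}_B\in\mathbb{R}^{n\times n}$ be symmetric positive definite. Let $\omega_1\in[0,1]$. Then $\mathcal{E}(\mathbf{B}_{\mathrm{SCI}}(\omega_1))$ tightly circumscribes $\mathcal{V}^*$ if and only if there exists $\mathbf{x}\neq\mathbf{0}$ such that $g(\mathbf{x})=\mathbf{x}^\intercal\mathbf{H}_{\mathrm{SCI}}(\omega_1)\mathbf{x}$.
   Context: $\mathbf{C}_A=\mathbf{P}_A+\mathbf{Q}_A$, $\mathbf{C}_B=\mathbf{P}_B+\mathbf{Q}_B$. For $\omega\in[0,1]$, $\bar\omega=1-\omega$: $\mathbf{H}_{\mathrm{SCI}}(\omega)=\omega(\mathbf{P}_A+\omega\mathbf{Q}_A)^{-1}+\bar\omega(\mathbf{P}_B+\bar\omega\mathbf{Q}_B)^{-1}$ and $\mathbf{B}_{\mathrm{SCI}}(\omega)=\mathbf{H}_{\mathrm{SCI}}(\omega)^{-1}$. $\mathcal{A}_{\mathrm{Split}}=\{\mathbf{M} : \begin{bmatrix}\mathbf{P}_A & \mathbf{M}\\ \mathbf{M}^\intercal & \mathbf{P}_B\end{bmatrix}\succeq 0\}$. $\mathbf{C}_F(\mathbf{K},\mathbf{P}_{AB})=\mathbf{K}_A\mathbf{C}_A\mathbf{K}_A^\intercal+\mathbf{K}_A\mathbf{P}_{AB}\mathbf{K}_B^\intercal+\mathbf{K}_B\mathbf{P}_{AB}^\intercal\mathbf{K}_A^\intercal+\mathbf{K}_B\mathbf{C}_B\mathbf{K}_B^\intercal$.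 For $\mathbf{P}_{AB}\in\mathcal{A}_{\mathrm{Split}}$: $\mathbf{R}=\mathbf{C}_A+\mathbf{C}_B-\mathbf{P}_{AB}-\mathbf{P}_{AB}^\intercal$, $\mathbf{K}_A^*=(\mathbf{C}_B-\mathbf{P}_{AB}^\intercal)\mathbf{R}^{-1}$, $\mathbf{C}_F^*(\mathbf{P}_{AB})=\mathbf{C}_F((\mathbf{K}_A^*,\mathbf{I}-\mathbf{K}_A^* ),\mathbf{P}_{AB})$, $\mathbf{M}_F^*(\mathbf{P}_{AB})=\mathbf{C}_F^*(\mathbf{P}_{AB})^{-1}$. $g(\mathbf{x})=\min_{\mathbf{P}_{AB}\in\mathcal{A}_{\mathrm{Split}}}\mathbf{x}^\intercal\mathbf{M}_F^*(\mathbf{P}_{AB})\mathbf{x}$. For symmetric positive definite $\mathbf{P}$, $\mathcal{E}(\mathbf{P})=\{\mathbf{x}:\mathbf{x}^\intercal\mathbf{P}^{-1}\mathbf{x}\le1\}$; $\mathcal{V}^*=\bigcup_{\mathbf{P}_{AB}\in\mathcal{A}_{\mathrm{Split}}}\mathcal{E}(\mathbf{C}_F^*(\mathbf{P}_{AB}))$. $\mathcal{E}(\mathbf{P})$ tightly circumscribes $\mathcal{V}^*$ if $\mathcal{V}^*\subseteq\mathcal{E}(\mathbf{P})$ and for every symmetric positive definite $\mathbf{Q}$, $\mathcal{V}^*\subseteq\mathcal{E}(\mathbf{Q})\subseteq\mathcal{E}(\mathbf{P})$ implies $\mathbf{Q}=\mathbf{P}$. *)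

theory Defs
  imports "HOL-Analysis.Analysis"
begin

definition sym_mat :: "real^'n^'n \<Rightarrow> bool" where
  "sym_mat A \<longleftrightarrow> transpose A = A"

definition spd :: "real^'n^'n \<Rightarrow> bool" where
  "spd A \<longleftrightarrow> sym_mat A \<and> (\<forall>x. x \<noteq> 0 \<longrightarrow> x \<bullet> (A *v x) > 0)"

definition psd :: "real^'n^'n \<Rightarrow> bool" where
  "psd A \<longleftrightarrow> sym_mat A \<and> (\<forall>x. x \<bullet> (A *v x) \<ge> 0)"

definition block2 :: "real^'n^'n \<Rightarrow> real^'n^'n \<Rightarrow> real^'n^'n \<Rightarrow> real^('n+'n)^('n+'n)" where
  "block2 A M B = (\<chi> i j. case i of
       Inl a \<Rightarrow> (case j of Inl b \<Rightarrow> A $ a $ b | Inr b \<Rightarrow> M $ a $ b)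
     | Inr a \<Rightarrow> (case j of Inl b \<Rightarrow> transpose M $ a $ b | Inr b \<Rightarrow> B $ a $ b))"

definition H_SCI :: "real^'n^'n \<Rightarrow> real^'n^'n \<Rightarrow> real^'n^'n \<Rightarrow> real^'n^'n \<Rightarrow> real \<Rightarrow> real^'n^'n" where
  "H_SCI PA PB QA QB w =
     w *\<^sub>R matrix_inv (PA + w *\<^sub>R QA) + (1 - w) *\<^sub>R matrix_inv (PB + (1 - w) *\<^sub>R QB)"

definition B_SCI :: "real^'n^'n \<Rightarrow> real^'n^'n \<Rightarrow> real^'n^'n \<Rightarrow> real^'n^'n \<Rightarrow> real \<Rightarrow> real^'n^'n" where
  "B_SCI PA PB QA QB w = matrix_inv (H_SCI PA PB QA QB w)"

definition A_Split :: "real^'n^'n \<Rightarrow> real^'n^'n \<Rightarrow> (real^'n^'n) set" where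
  "A_Split PA PB = {M. psd (block2 PA M PB)}"

definition C_F :: "real^'n^'n \<Rightarrow> real^'n^'n \<Rightarrow> real^'n^'n \<Rightarrow> real^'n^'n \<Rightarrow> real^'n^'n \<Rightarrow> real^'n^'n" where
  "C_F CA CB KA KB PAB =
     KA ** CA ** transpose KA + KA ** PAB ** transpose KB
   + KB ** transpose PAB ** transpose KA + KB ** CB ** transpose KB"

definition C_F_opt :: "real^'n^'n \<Rightarrow> real^'n^'n \<Rightarrow> real^'n^'n \<Rightarrow> real^'n^'n \<Rightarrow> real^'n^'n \<Rightarrow> real^'n^'n" where
  "C_F_opt PA PB QA QB PAB =
     (let CA = PA + QA; CB = PB + QB;
          R = CA + CB - PAB - transpose PAB;
          KA = (CB - transpose PAB) ** matrix_inv R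
      in C_F CA CB KA (mat 1 - KA) PAB)"

definition M_F_opt :: "real^'n^'n \<Rightarrow> real^'n^'n \<Rightarrow> real^'n^'n \<Rightarrow> real^'n^'n \<Rightarrow> real^'n^'n \<Rightarrow> real^'n^'n" where
  "M_F_opt PA PB QA QB PAB = matrix_inv (C_F_opt PA PB QA QB PAB)"

text \<open>g(x) = min over A_Split; written as an infimum (the minimum is attained).\<close>
definition g_fun :: "real^'n^'n \<Rightarrow> real^'n^'n \<Rightarrow> real^'n^'n \<Rightarrow> real^'n^'n \<Rightarrow> real^'n \<Rightarrow> real" where
  "g_fun PA PB QA QB x = (INF PAB \<in> A_Split PA PB. x \<bullet> (M_F_opt PA PB QA QB PAB *v x))"

definition ellipsoid :: "real^'n^'n \<Rightarrow> (real^'n) set" where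
  "ellipsoid P = {x. x \<bullet> (matrix_inv P *v x) \<le> 1}"

definition V_star :: "real^'n^'n \<Rightarrow> real^'n^'n \<Rightarrow> real^'n^'n \<Rightarrow> real^'n^'n \<Rightarrow> (real^'n) set" where
  "V_star PA PB QA QB = (\<Union>PAB \<in> A_Split PA PB. ellipsoid (C_F_opt PA PB QA QB PAB))"

definition tightly_circumscribes :: "real^'n^'n \<Rightarrow> (real^'n) set \<Rightarrow> bool" where
  "tightly_circumscribes P V \<longleftrightarrow> V \<subseteq> ellipsoid P \<and>
     (\<forall>Q. spd Q \<longrightarrow> V \<subseteq> ellipsoid Q \<longrightarrow> ellipsoid Q \<subseteq> ellipsoid P \<longrightarrow> Q = P)"

end

theory Submission
  imports Defs
begin


lemma inv_props:
  fixes A :: "real^'n^'n"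
  assumes "invertible A"
  shows "A ** matrix_inv A = mat 1" "matrix_inv A ** A = mat 1"
proof -
  have "\<exists>A'. A ** A' = mat 1 \<and> A' ** A = mat 1" using assms unfolding invertible_def by blast
  from someI_ex[OF this] show "A ** matrix_inv A = mat 1" "matrix_inv A ** A = mat 1"
    unfolding matrix_inv_def by auto
qed

lemma inv_mv:
  fixes A :: "real^'n^'n"
  assumes "invertible A"
  shows "A *v (matrix_inv A *v x) = x" "matrix_inv A *v (A *v x) = x"
  using inv_props[OF assms] by (simp_all add: matrix_vector_mul_assoc)

lemma inv_unique:
  fixes A B :: "real^'n^'n"
  assumes "invertible A" "B ** A = mat 1"
  shows "matrix_inv A = B"
proof -
  have "B = B ** (A ** matrix_inv A)" using inv_props[OF assms(1)] by simp
  also have "\<dots> = matrix_inv A" by (simp add: matrix_mul_assoc assms(2))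
  finally show ?thesis by simp
qed

lemma inv_invertible:
  fixes A :: "real^'n^'n"
  assumes "invertible A"
  shows "invertible (matrix_inv A)"
  using inv_props[OF assms] unfolding invertible_def by blast

lemma inv_inv:
  fixes A :: "real^'n^'n"
  assumes "invertible A"
  shows "matrix_inv (matrix_inv A) = A"
  by (rule inv_unique[OF inv_invertible[OF assms]]) (simp add: inv_props[OF assms])

lemma sym_dot:
  fixes A :: "real^'n^'n"
  assumes "sym_mat A"
  shows "x \<bullet> (A *v y) = y \<bullet> (A *v x)"
proof -
  have "x \<bullet> (A *v y) = (x v* A) \<bullet> y" by (simp add: dot_lmul_matrix)
  also have "x v* A = transpose A *v x" by simp
  also have "\<dots> = A *v x" using assms unfolding sym_mat_def by simp
  finally show ?thesis by (simp add: inner_commute)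
qed

lemma dot_transpose:
  fixes A :: "real^'n^'n"
  shows "x \<bullet> (A *v y) = (transpose A *v x) \<bullet> y"
  by (simp add: dot_lmul_matrix)

lemma dot_transposeT:
  fixes P :: "real^'n^'n"
  shows "v \<bullet> (transpose P *v s) = s \<bullet> (P *v v)"
  by (metis dot_transpose transpose_transpose inner_commute)

lemma mv_neg: "(A::real^'n^'m) *v (- y) = - (A *v y)"
  by (simp add: matrix_vector_mult_def vec_eq_iff sum_negf)

lemma spd_sym: "spd A \<Longrightarrow> sym_mat A" unfolding spd_def by simp
lemma spd_pos: "spd A \<Longrightarrow> x \<noteq> 0 \<Longrightarrow> x \<bullet> (A *v x) > 0" unfolding spd_def by simp
lemma spd_nonneg: "spd A \<Longrightarrow> x \<bullet> (A *v x) \<ge> 0"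
  unfolding spd_def by (cases "x = 0") (auto intro: less_imp_le)

lemma spd_invertible:
  fixes A :: "real^'n^'n"
  assumes "spd A" shows "invertible A"
proof -
  have "\<forall>x. A *v x = 0 \<longrightarrow> x = 0"
  proof (intro allI impI)
    fix x assume "A *v x = 0"
    then have "x \<bullet> (A *v x) = 0" by simp
    then show "x = 0" using spd_pos[OF assms, of x] by (cases "x = 0") auto
  qed
  then show ?thesis using matrix_left_invertible_ker invertible_left_inverse by blast
qed

lemma inv_sym:
  fixes A :: "real^'n^'n"
  assumes "sym_mat A" "invertible A"
  shows "sym_mat (matrix_inv A)"
proof -
  have "transpose (matrix_inv A) ** A = mat 1"
  proof -
    have "transpose (A ** matrix_inv A) = mat 1" using inv_props[OF assms(2)] by (simp add: transpose_mat)
    then show ?thesis using assms(1) unfolding sym_mat_def by (simp add: matrix_transpose_mul)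
  qed
  then have "matrix_inv A = transpose (matrix_inv A)" by (rule inv_unique[OF assms(2)])
  then show ?thesis unfolding sym_mat_def by simp
qed

lemma spd_inv:
  fixes A :: "real^'n^'n"
  assumes "spd A" shows "spd (matrix_inv A)"
  unfolding spd_def
proof (intro conjI allI impI)
  have inv: "invertible A" by (rule spd_invertible[OF assms])
  show "sym_mat (matrix_inv A)" by (rule inv_sym[OF spd_sym[OF assms] inv])
  fix x :: "real^'n" assume "x \<noteq> 0"
  define y where "y = matrix_inv A *v x"
  have xy: "x = A *v y" unfolding y_def using inv_mv[OF inv] by simp
  have "y \<noteq> 0" using \<open>x \<noteq> 0\<close> xy by auto
  then have "y \<bullet> (A *v y) > 0" using spd_pos[OF assms] by blast
  moreover have "x \<bullet> (matrix_inv A *v x) = y \<bullet> (A *v y)" using xy y_def by (metis inner_commute)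
  ultimately show "x \<bullet> (matrix_inv A *v x) > 0" by simp
qed

lemma psd_kernel:
  fixes D :: "real^'n^'n"
  assumes "sym_mat D" "\<forall>x. x \<bullet> (D *v x) \<ge> 0" "x \<bullet> (D *v x) = 0"
  shows "D *v x = 0"
proof -
  define y where "y = D *v x"
  have "\<forall>t::real. 0 \<le> (x + t *\<^sub>R y) \<bullet> (D *v (x + t *\<^sub>R y))" using assms(2) by blast
  moreover have "\<And>t. (x + t *\<^sub>R y) \<bullet> (D *v (x + t *\<^sub>R y)) = 2 * t * (y \<bullet> y) + t^2 * (y \<bullet> (D *v y))"
    using assms(3) sym_dot[OF assms(1), of x y]
    by (simp add: matrix_vector_right_distrib matrix_vector_mult_scaleR inner_add_left inner_add_right
        power2_eq_square y_def algebra_simps)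
  ultimately have h: "\<forall>t::real. 0 \<le> 2 * t * (y \<bullet> y) + t^2 * (y \<bullet> (D *v y))" by simp
  show ?thesis
  proof (rule ccontr)
    assume "D *v x \<noteq> 0"
    then have yy: "y \<bullet> y > 0" unfolding y_def by simp
    define c where "c = \<bar>y \<bullet> (D *v y)\<bar> + 1"
    have c: "c > 0" "y \<bullet> (D *v y) \<le> c" unfolding c_def by auto
    define t where "t = - (y \<bullet> y) / c"
    have "0 \<le> 2 * t * (y \<bullet> y) + t^2 * (y \<bullet> (D *v y))" using h by blast
    also have "\<dots> \<le> 2 * t * (y \<bullet> y) + t^2 * c" using c by (simp add: mult_left_mono)
    also have "\<dots> = - (((y \<bullet> y)^2) / c)" unfolding t_def using c by (simp add: field_simps power2_eq_square)
    also have "\<dots> < 0" using yy c by simp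
    finally show False by simp
  qed
qed

lemma transpose_add: "transpose (A + B) = transpose A + transpose (B :: real^'n^'m)"
  by (simp add: transpose_def vec_eq_iff)
lemma transpose_diff: "transpose (A - B) = transpose A - transpose (B :: real^'n^'m)"
  by (simp add: transpose_def vec_eq_iff)

lemma sym_add: "sym_mat A \<Longrightarrow> sym_mat B \<Longrightarrow> sym_mat (A + B)"
  unfolding sym_mat_def by (simp add: transpose_add)
lemma sym_diff: "sym_mat A \<Longrightarrow> sym_mat B \<Longrightarrow> sym_mat (A - B)"
  unfolding sym_mat_def by (simp add: transpose_diff)
lemma sym_scale: "sym_mat A \<Longrightarrow> sym_mat (c *\<^sub>R A)"
  unfolding sym_mat_def by (simp add: transpose_scalar)

lemma spd_add_scale:
  fixes P Q :: "real^'n^'n"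
  assumes "spd P" "spd Q" "0 \<le> s"
  shows "spd (P + s *\<^sub>R Q)"
  unfolding spd_def
proof (intro conjI allI impI)
  show "sym_mat (P + s *\<^sub>R Q)" using assms by (simp add: sym_add sym_scale spd_sym)
  fix x :: "real^'n" assume "x \<noteq> 0"
  have "x \<bullet> ((P + s *\<^sub>R Q) *v x) = x \<bullet> (P *v x) + s * (x \<bullet> (Q *v x))"
    by (simp add: matrix_vector_mult_add_rdistrib scaleR_matrix_vector_assoc[symmetric] inner_add_right)
  moreover have "x \<bullet> (P *v x) > 0" using assms(1) \<open>x \<noteq> 0\<close> by (rule spd_pos)
  moreover have "s * (x \<bullet> (Q *v x)) \<ge> 0" using assms(3) spd_nonneg[OF assms(2)] by simp
  ultimately show "x \<bullet> ((P + s *\<^sub>R Q) *v x) > 0" by linarith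
qed

lemma quad_upper:
  fixes A :: "real^'n^'n"
  shows "\<exists>M>0. \<forall>x. x \<bullet> (A *v x) \<le> M * (x \<bullet> x)"
proof -
  obtain B where B: "\<forall>x. norm (A *v x) \<le> B * norm x"
    using linear_bounded[OF matrix_vector_mul_linear] by blast
  show ?thesis
  proof (intro exI[of _ "\<bar>B\<bar> + 1"] conjI allI)
    fix x :: "real^'n"
    have "x \<bullet> (A *v x) \<le> norm x * norm (A *v x)" by (rule norm_cauchy_schwarz)
    also have "\<dots> \<le> norm x * (B * norm x)" using B by (simp add: mult_left_mono)
    also have "\<dots> \<le> (\<bar>B\<bar> + 1) * (norm x * norm x)"
    proof -
      have "B * (norm x * norm x) \<le> \<bar>B\<bar> * (norm x * norm x)" by (rule mult_right_mono) auto
      moreover have "0 \<le> norm x * norm x" by simp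
      moreover have "norm x * (B * norm x) = B * (norm x * norm x)" by simp
      ultimately show ?thesis by (simp only: distrib_right)
    qed
    also have "norm x * norm x = x \<bullet> x" by (simp add: power2_norm_eq_inner[symmetric] power2_eq_square)
    finally show "x \<bullet> (A *v x) \<le> (\<bar>B\<bar> + 1) * (x \<bullet> x)" .
  qed simp
qed

lemma quad_lower:
  fixes A :: "real^'n^'n"
  assumes "\<forall>x. x \<noteq> 0 \<longrightarrow> x \<bullet> (A *v x) > 0"
  shows "\<exists>m>0. \<forall>x. m * (x \<bullet> x) \<le> x \<bullet> (A *v x)"
proof -
  let ?S = "sphere (0::real^'n) 1"
  have cpt: "compact ?S" by (rule compact_sphere)
  obtain i :: 'n where True by blast
  have "axis i 1 \<in> ?S" by simp
  then have ne: "?S \<noteq> {}" by blast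
  have cont: "continuous_on ?S (\<lambda>x. x \<bullet> (A *v x))"
    by (intro continuous_intros linear_continuous_on linear_conv_bounded_linear[THEN iffD1] matrix_vector_mul_linear)
  obtain x0 where x0: "x0 \<in> ?S" "\<forall>y\<in>?S. x0 \<bullet> (A *v x0) \<le> y \<bullet> (A *v y)"
    using continuous_attains_inf[OF cpt ne cont] by blast
  have "x0 \<noteq> 0" using x0(1) by auto
  then have m: "x0 \<bullet> (A *v x0) > 0" using assms by blast
  show ?thesis
  proof (intro exI[of _ "x0 \<bullet> (A *v x0)"] conjI allI)
    fix x :: "real^'n"
    show "(x0 \<bullet> (A *v x0)) * (x \<bullet> x) \<le> x \<bullet> (A *v x)"
    proof (cases "x = 0")
      case True then show ?thesis by simp
    next
      case False
      define y where "y = (1 / norm x) *\<^sub>R x"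
      have "y \<in> ?S" using False by (simp add: y_def)
      then have "x0 \<bullet> (A *v x0) \<le> y \<bullet> (A *v y)" using x0 by blast
      also have "y \<bullet> (A *v y) = (x \<bullet> (A *v x)) / (norm x)^2"
        by (simp add: y_def matrix_vector_mult_scaleR power2_eq_square)
      finally have "x0 \<bullet> (A *v x0) * (norm x)^2 \<le> x \<bullet> (A *v x)"
        using False by (simp add: field_simps)
      then show ?thesis by (simp add: power2_norm_eq_inner)
    qed
  qed (rule m)
qed

lemma psd_cs:
  fixes S :: "real^'n^'n"
  assumes "sym_mat S" "\<forall>x. x \<bullet> (S *v x) \<ge> 0"
  shows "(u \<bullet> (S *v a))^2 \<le> (u \<bullet> (S *v u)) * (a \<bullet> (S *v a))"
proof -
  have exp: "\<And>t. (u + t *\<^sub>R a) \<bullet> (S *v (u + t *\<^sub>R a)) = u \<bullet> (S *v u) + 2 * t * (u \<bullet> (S *v a)) + t^2 * (a \<bullet> (S *v a))"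
    using sym_dot[OF assms(1), of u a]
    by (simp add: matrix_vector_right_distrib matrix_vector_mult_scaleR inner_add_left inner_add_right
        power2_eq_square algebra_simps)
  have h: "\<And>t. 0 \<le> u \<bullet> (S *v u) + 2 * t * (u \<bullet> (S *v a)) + t^2 * (a \<bullet> (S *v a))"
    using assms(2) exp by metis
  show ?thesis
  proof (cases "a \<bullet> (S *v a) = 0")
    case True
    have "u \<bullet> (S *v a) = 0"
    proof (rule ccontr)
      assume ne: "u \<bullet> (S *v a) \<noteq> 0"
      define t where "t = - (\<bar>u \<bullet> (S *v u)\<bar> + 1) / (2 * (u \<bullet> (S *v a)))"
      have "0 \<le> u \<bullet> (S *v u) + 2 * t * (u \<bullet> (S *v a))" using h[of t] True by simp
      also have "2 * t * (u \<bullet> (S *v a)) = - (\<bar>u \<bullet> (S *v u)\<bar> + 1)" using ne by (simp add: t_def)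
      finally show False by linarith
    qed
    then show ?thesis using True by simp
  next
    case False
    then have pos: "a \<bullet> (S *v a) > 0" using assms(2) by (metis order_le_less)
    define t where "t = - (u \<bullet> (S *v a)) / (a \<bullet> (S *v a))"
    have "0 \<le> u \<bullet> (S *v u) + 2 * t * (u \<bullet> (S *v a)) + t^2 * (a \<bullet> (S *v a))" by (rule h)
    also have "\<dots> = u \<bullet> (S *v u) - (u \<bullet> (S *v a))^2 / (a \<bullet> (S *v a))"
      using pos by (simp add: t_def field_simps power2_eq_square)
    finally show ?thesis using pos by (simp add: field_simps)
  qed
qed

lemma quad_expand:
  fixes N :: "real^'n^'n"
  assumes "sym_mat N"
  shows "(r *\<^sub>R x + v) \<bullet> (N *v (r *\<^sub>R x + v)) = r^2 * (x \<bullet> (N *v x)) + 2 * r * (x \<bullet> (N *v v)) + v \<bullet> (N *v v)"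
  using sym_dot[OF assms, of v x]
  by (simp add: matrix_vector_right_distrib matrix_vector_mult_scaleR inner_add_left inner_add_right
      power2_eq_square algebra_simps)

lemma quad_root:
  fixes \<alpha> \<beta> \<gamma> :: real
  assumes "\<alpha> \<noteq> 0" "\<alpha> * \<gamma> \<le> \<beta>^2"
  shows "\<exists>r. \<alpha> * r^2 + 2 * \<beta> * r + \<gamma> = 0"
proof -
  define d where "d = sqrt (\<beta>^2 - \<alpha> * \<gamma>)"
  have d2: "d^2 = \<beta>^2 - \<alpha> * \<gamma>" unfolding d_def using assms(2) by simp
  define r where "r = (- \<beta> + d) / \<alpha>"
  have "\<alpha> * r^2 + 2 * \<beta> * r + \<gamma> = ((- \<beta> + d)^2 + 2 * \<beta> * (- \<beta> + d) + \<alpha> * \<gamma>) / \<alpha>"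
    unfolding r_def using assms(1) by (simp add: field_simps power2_eq_square)
  also have "(- \<beta> + d)^2 + 2 * \<beta> * (- \<beta> + d) + \<alpha> * \<gamma> = d^2 - \<beta>^2 + \<alpha> * \<gamma>"
    by (simp add: power2_eq_square algebra_simps)
  also have "\<dots> = 0" using d2 by simp
  finally have "\<alpha> * r^2 + 2 * \<beta> * r + \<gamma> = 0" by simp
  then show ?thesis by blast
qed



locale side =
  fixes P Q :: "real^'n^'n"
  assumes P: "spd P" and Q: "spd Q"
begin

definition F :: "real \<Rightarrow> real^'n^'n" where "F s = matrix_inv (P + s *\<^sub>R Q)"

lemma PQ_spd: "0 \<le> s \<Longrightarrow> spd (P + s *\<^sub>R Q)" using spd_add_scale[OF P Q] .

lemma F_spd: "0 \<le> s \<Longrightarrow> spd (F s)" unfolding F_def using spd_inv[OF PQ_spd] .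

lemma F_sym: "0 \<le> s \<Longrightarrow> sym_mat (F s)" using spd_sym[OF F_spd] .

lemma F_eq: "0 \<le> s \<Longrightarrow> P *v (F s *v x) + s *\<^sub>R (Q *v (F s *v x)) = x"
proof -
  assume s: "0 \<le> s"
  have "(P + s *\<^sub>R Q) *v (F s *v x) = x" unfolding F_def using inv_mv(1)[OF spd_invertible[OF PQ_spd[OF s]]] .
  then show ?thesis by (simp add: matrix_vector_mult_add_rdistrib scaleR_matrix_vector_assoc[symmetric])
qed

lemma F_uniq:
  assumes "0 \<le> s" "P *v a + s *\<^sub>R (Q *v a) = x"
  shows "a = F s *v x"
proof -
  have "(P + s *\<^sub>R Q) *v a = x" using assms(2)
    by (simp add: matrix_vector_mult_add_rdistrib scaleR_matrix_vector_assoc[symmetric])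
  then show ?thesis unfolding F_def using inv_mv(2)[OF spd_invertible[OF PQ_spd[OF assms(1)]]] by metis
qed

lemma F_zero: "F s *v x = 0 \<Longrightarrow> 0 \<le> s \<Longrightarrow> x = 0"
  using F_eq[of s x] by simp

definition pi :: "real \<Rightarrow> real^'n \<Rightarrow> real" where
  "pi s x = (F s *v x) \<bullet> (P *v (F s *v x))"

definition rho :: "real \<Rightarrow> real \<Rightarrow> real^'n \<Rightarrow> real" where
  "rho s1 s2 x = (F s1 *v x) \<bullet> (P *v (F s2 *v (Q *v (F s1 *v x))))"

lemma T_identity:
  assumes s1: "0 \<le> s1" and s2: "0 \<le> s2"
  shows "s2 * (x \<bullet> (F s2 *v x)) - s1 * (x \<bullet> (F s1 *v x))
           = (s2 - s1) * pi s1 x - (s2 - s1)^2 * rho s1 s2 x"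
proof -
  define a1 where "a1 = F s1 *v x"
  define a2 where "a2 = F s2 *v x"
  define f where "f = F s2 *v (Q *v a1)"
  have e1: "P *v a1 + s1 *\<^sub>R (Q *v a1) = x" unfolding a1_def by (rule F_eq[OF s1])
  have e2: "P *v a2 + s2 *\<^sub>R (Q *v a2) = x" unfolding a2_def by (rule F_eq[OF s2])
  have ef: "P *v f + s2 *\<^sub>R (Q *v f) = Q *v a1" unfolding f_def by (rule F_eq[OF s2])
  have sP: "\<And>u v. u \<bullet> (P *v v) = v \<bullet> (P *v u)" using sym_dot[OF spd_sym[OF P]] by blast
  have sQ: "\<And>u v. u \<bullet> (Q *v v) = v \<bullet> (Q *v u)" using sym_dot[OF spd_sym[OF Q]] by blast
  have "P *v (a1 - (s2 - s1) *\<^sub>R f) + s2 *\<^sub>R (Q *v (a1 - (s2 - s1) *\<^sub>R f)) = x"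
  proof -
    have "P *v (a1 - (s2 - s1) *\<^sub>R f) + s2 *\<^sub>R (Q *v (a1 - (s2 - s1) *\<^sub>R f))
        = P *v a1 + s2 *\<^sub>R (Q *v a1) - (s2 - s1) *\<^sub>R (P *v f + s2 *\<^sub>R (Q *v f))"
      by (simp add: matrix_vector_mult_diff_distrib matrix_vector_mult_scaleR algebra_simps)
    also have "\<dots> = P *v a1 + s1 *\<^sub>R (Q *v a1)" unfolding ef by (simp add: algebra_simps)
    finally show ?thesis using e1 by simp
  qed
  then have a2f: "a2 = a1 - (s2 - s1) *\<^sub>R f" unfolding a2_def using F_uniq[OF s2] by metis
  have xa2: "x \<bullet> a2 = a1 \<bullet> (P *v a2) + s1 * (a1 \<bullet> (Q *v a2))"
  proof -
    have "x \<bullet> a2 = (P *v a1) \<bullet> a2 + s1 * ((Q *v a1) \<bullet> a2)"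
      using e1 by (metis inner_add_left inner_scaleR_left)
    moreover have "(P *v a1) \<bullet> a2 = a1 \<bullet> (P *v a2)" by (metis inner_commute sP)
    moreover have "(Q *v a1) \<bullet> a2 = a1 \<bullet> (Q *v a2)" by (metis inner_commute sQ)
    ultimately show ?thesis by simp
  qed
  have xa1: "x \<bullet> a1 = a1 \<bullet> (P *v a2) + s2 * (a1 \<bullet> (Q *v a2))"
  proof -
    have "x \<bullet> a1 = (P *v a2) \<bullet> a1 + s2 * ((Q *v a2) \<bullet> a1)"
      using e2 by (metis inner_add_left inner_scaleR_left)
    moreover have "(P *v a2) \<bullet> a1 = a2 \<bullet> (P *v a1)" by (metis inner_commute sP)
    moreover have "(Q *v a2) \<bullet> a1 = a2 \<bullet> (Q *v a1)" by (metis inner_commute sQ)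
    ultimately have "x \<bullet> a1 = a2 \<bullet> (P *v a1) + s2 * (a2 \<bullet> (Q *v a1))" by simp
    then show ?thesis using sP[of a2 a1] sQ[of a2 a1] by simp
  qed
  have m: "a1 \<bullet> (P *v a2) = pi s1 x - (s2 - s1) * rho s1 s2 x"
    unfolding pi_def rho_def a1_def[symmetric] f_def[symmetric] a2f
    by (simp add: matrix_vector_mult_diff_distrib matrix_vector_mult_scaleR inner_diff_right)
  have "s2 * (x \<bullet> (F s2 *v x)) - s1 * (x \<bullet> (F s1 *v x)) = s2 * (x \<bullet> a2) - s1 * (x \<bullet> a1)"
    unfolding a1_def a2_def ..
  also have "\<dots> = (s2 - s1) * (a1 \<bullet> (P *v a2))" unfolding xa2 xa1 by (simp add: algebra_simps)
  also have "\<dots> = (s2 - s1) * pi s1 x - (s2 - s1)^2 * rho s1 s2 x" unfolding m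
    by (simp add: algebra_simps power2_eq_square)
  finally show ?thesis .
qed

lemma rho_formula:
  fixes x
  assumes s1: "0 \<le> s1" and s2: "0 \<le> s2"
  defines "a1 \<equiv> F s1 *v x" and "f \<equiv> F s2 *v (Q *v (F s1 *v x))"
  shows "rho s1 s2 x = (a1 - s2 *\<^sub>R f) \<bullet> (Q *v (a1 - s2 *\<^sub>R f)) + s2 * (f \<bullet> (P *v f))"
    and "rho s1 s2 x = a1 \<bullet> (Q *v a1) - s2 * (f \<bullet> (P *v f)) - s2^2 * (f \<bullet> (Q *v f))"
proof -
  have ef: "P *v f + s2 *\<^sub>R (Q *v f) = Q *v a1" unfolding f_def a1_def by (rule F_eq[OF s2])
  have sP: "\<And>u v. u \<bullet> (P *v v) = v \<bullet> (P *v u)" using sym_dot[OF spd_sym[OF P]] by blast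
  have sQ: "\<And>u v. u \<bullet> (Q *v v) = v \<bullet> (Q *v u)" using sym_dot[OF spd_sym[OF Q]] by blast
  have r: "rho s1 s2 x = a1 \<bullet> (P *v f)" unfolding rho_def a1_def f_def ..
  have i1: "a1 \<bullet> (Q *v a1) = a1 \<bullet> (P *v f) + s2 * (a1 \<bullet> (Q *v f))"
    unfolding ef[symmetric] by (simp add: inner_add_right)
  have i2: "f \<bullet> (Q *v a1) = f \<bullet> (P *v f) + s2 * (f \<bullet> (Q *v f))"
    unfolding ef[symmetric] by (simp add: inner_add_right)
  have i3: "a1 \<bullet> (Q *v f) = f \<bullet> (Q *v a1)" by (rule sQ)
  show "rho s1 s2 x = a1 \<bullet> (Q *v a1) - s2 * (f \<bullet> (P *v f)) - s2^2 * (f \<bullet> (Q *v f))"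
    unfolding r using i1 i2 i3 by (simp add: algebra_simps power2_eq_square)
  moreover have "(a1 - s2 *\<^sub>R f) \<bullet> (Q *v (a1 - s2 *\<^sub>R f)) = a1 \<bullet> (Q *v a1) - 2 * s2 * (a1 \<bullet> (Q *v f)) + s2^2 * (f \<bullet> (Q *v f))"
    using sQ[of f a1]
    by (simp add: matrix_vector_mult_diff_distrib matrix_vector_mult_scaleR inner_diff_left inner_diff_right
        algebra_simps power2_eq_square)
  ultimately show "rho s1 s2 x = (a1 - s2 *\<^sub>R f) \<bullet> (Q *v (a1 - s2 *\<^sub>R f)) + s2 * (f \<bullet> (P *v f))"
    using i2 i3 by (simp add: algebra_simps power2_eq_square)
qed

lemma rho_nonneg: "0 \<le> s1 \<Longrightarrow> 0 \<le> s2 \<Longrightarrow> 0 \<le> rho s1 s2 x"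
  using rho_formula(1)[of s1 s2 x] spd_nonneg[OF P] spd_nonneg[OF Q] by simp

lemma rho_pos:
  assumes s1: "0 \<le> s1" and s2: "0 \<le> s2" and x: "x \<noteq> 0"
  shows "0 < rho s1 s2 x"
proof -
  define a1 where "a1 = F s1 *v x"
  define f where "f = F s2 *v (Q *v (F s1 *v x))"
  have r: "rho s1 s2 x = (a1 - s2 *\<^sub>R f) \<bullet> (Q *v (a1 - s2 *\<^sub>R f)) + s2 * (f \<bullet> (P *v f))"
    unfolding a1_def f_def by (rule rho_formula(1)[OF s1 s2])
  have a1: "a1 \<noteq> 0" using F_zero[OF _ s1] x unfolding a1_def by blast
  show ?thesis
  proof (cases "a1 - s2 *\<^sub>R f = 0")
    case False
    then have "0 < (a1 - s2 *\<^sub>R f) \<bullet> (Q *v (a1 - s2 *\<^sub>R f))" by (rule spd_pos[OF Q])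
    moreover have "0 \<le> s2 * (f \<bullet> (P *v f))" using s2 spd_nonneg[OF P] by simp
    ultimately show ?thesis using r by linarith
  next
    case True
    then have "a1 = s2 *\<^sub>R f" by simp
    then have "s2 \<noteq> 0" "f \<noteq> 0" using a1 by auto
    then have "0 < s2 * (f \<bullet> (P *v f))" using s2 spd_pos[OF P] by simp
    then show ?thesis using r True by simp
  qed
qed

lemma rho_upper:
  assumes "0 \<le> s1" "0 \<le> s2"
  shows "rho s1 s2 x \<le> (F s1 *v x) \<bullet> (Q *v (F s1 *v x))"
proof -
  define f where "f = F s2 *v (Q *v (F s1 *v x))"
  have "0 \<le> s2 * (f \<bullet> (P *v f))" using assms spd_nonneg[OF P] by simp
  moreover have "0 \<le> s2^2 * (f \<bullet> (Q *v f))" using spd_nonneg[OF Q] by simp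
  ultimately show ?thesis using rho_formula(2)[OF assms, of x] unfolding f_def by linarith
qed

lemma pi_diff:
  assumes s1: "0 \<le> s1" and s2: "0 \<le> s2"
  shows "pi s1 x - pi s2 x = (s2 - s1) * (rho s1 s2 x + rho s2 s1 x)"
proof (cases "s1 = s2")
  case True then show ?thesis by simp
next
  case False
  have t12: "s2 * (x \<bullet> (F s2 *v x)) - s1 * (x \<bullet> (F s1 *v x)) = (s2 - s1) * pi s1 x - (s2 - s1)^2 * rho s1 s2 x"
    by (rule T_identity[OF s1 s2])
  have t21: "s1 * (x \<bullet> (F s1 *v x)) - s2 * (x \<bullet> (F s2 *v x)) = (s1 - s2) * pi s2 x - (s1 - s2)^2 * rho s2 s1 x"
    by (rule T_identity[OF s2 s1])
  have "(s2 - s1) * (pi s1 x - pi s2 x) = (s2 - s1) * ((s2 - s1) * (rho s1 s2 x + rho s2 s1 x))"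
    using t12 t21 by (simp add: algebra_simps power2_eq_square)
  then show ?thesis using False by simp
qed

lemma pi_mono: "0 \<le> s1 \<Longrightarrow> s1 \<le> s2 \<Longrightarrow> pi s2 x \<le> pi s1 x"
proof -
  assume a: "0 \<le> s1" "s1 \<le> s2"
  have "0 \<le> (s2 - s1) * (rho s1 s2 x + rho s2 s1 x)"
    using a rho_nonneg[of s1 s2 x] rho_nonneg[of s2 s1 x] by (intro mult_nonneg_nonneg) auto
  then show ?thesis using pi_diff[of s1 s2 x] a by simp
qed

lemma pi_strict: "0 \<le> s1 \<Longrightarrow> s1 < s2 \<Longrightarrow> x \<noteq> 0 \<Longrightarrow> pi s2 x < pi s1 x"
proof -
  assume a: "0 \<le> s1" "s1 < s2" "x \<noteq> 0"
  have "0 < (s2 - s1) * (rho s1 s2 x + rho s2 s1 x)"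
    using a rho_pos[of s1 s2 x] rho_nonneg[of s2 s1 x] by (intro mult_pos_pos) auto
  then show ?thesis using pi_diff[of s1 s2 x] a by simp
qed

lemma Q_le_P: "\<exists>c>0. \<forall>y. y \<bullet> (Q *v y) \<le> c * (y \<bullet> (P *v y))"
proof -
  obtain M where M: "M > 0" "\<forall>y. y \<bullet> (Q *v y) \<le> M * (y \<bullet> y)" using quad_upper by blast
  obtain m where m: "m > 0" "\<forall>y. m * (y \<bullet> y) \<le> y \<bullet> (P *v y)"
    using quad_lower[of P] spd_pos[OF P] by blast
  show ?thesis
  proof (intro exI[of _ "M / m"] conjI allI)
    fix y :: "real^'n"
    have "y \<bullet> (Q *v y) \<le> M * (y \<bullet> y)" using M by blast
    also have "\<dots> = (M / m) * (m * (y \<bullet> y))" using m by simp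
    also have "\<dots> \<le> (M / m) * (y \<bullet> (P *v y))" using m M by (intro mult_left_mono) auto
    finally show "y \<bullet> (Q *v y) \<le> M / m * (y \<bullet> (P *v y))" .
  qed (use M m in simp)
qed

lemma rho_bound: "\<exists>K. \<forall>s1 s2. 0 \<le> s1 \<longrightarrow> 0 \<le> s2 \<longrightarrow> rho s1 s2 x \<le> K"
proof -
  obtain c where c: "c > 0" "\<forall>y. y \<bullet> (Q *v y) \<le> c * (y \<bullet> (P *v y))" using Q_le_P by blast
  have "rho s1 s2 x \<le> c * pi 0 x" if "0 \<le> s1" "0 \<le> s2" for s1 s2
  proof -
    have "rho s1 s2 x \<le> (F s1 *v x) \<bullet> (Q *v (F s1 *v x))" by (rule rho_upper[OF that])
    also have "\<dots> \<le> c * pi s1 x" unfolding pi_def using c by blast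
    also have "\<dots> \<le> c * pi 0 x" using pi_mono[of 0 s1 x] that c by simp
    finally show ?thesis .
  qed
  then show ?thesis by blast
qed

definition Nm :: "real \<Rightarrow> real^'n^'n" where "Nm s = F s ** P ** F s"

lemma Nm_sym: "0 \<le> s \<Longrightarrow> sym_mat (Nm s)"
  using F_sym[of s] spd_sym[OF P] unfolding Nm_def sym_mat_def
  by (simp add: matrix_transpose_mul matrix_mul_assoc)

lemma pi_Nm: "0 \<le> s \<Longrightarrow> pi s x = x \<bullet> (Nm s *v x)"
proof -
  assume s: "0 \<le> s"
  have "x \<bullet> (Nm s *v x) = x \<bullet> (F s *v (P *v (F s *v x)))"
    unfolding Nm_def by (simp add: matrix_vector_mul_assoc[symmetric])
  also have "\<dots> = (P *v (F s *v x)) \<bullet> (F s *v x)" by (rule sym_dot[OF F_sym[OF s]])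
  finally show ?thesis unfolding pi_def by (simp add: inner_commute)
qed

lemma F_quad: "0 \<le> s \<Longrightarrow> x \<bullet> ((F s ** Q ** F s) *v x) = (F s *v x) \<bullet> (Q *v (F s *v x))"
proof -
  assume s: "0 \<le> s"
  have "x \<bullet> ((F s ** Q ** F s) *v x) = x \<bullet> (F s *v (Q *v (F s *v x)))"
    by (simp add: matrix_vector_mul_assoc[symmetric])
  also have "\<dots> = (Q *v (F s *v x)) \<bullet> (F s *v x)" by (rule sym_dot[OF F_sym[OF s]])
  finally show ?thesis by (simp add: inner_commute)
qed

end


locale sci =
  fixes PA PB QA QB :: "real^'n^'n"
  assumes PA: "spd PA" and PB: "spd PB" and QA: "spd QA" and QB: "spd QB"
begin

sublocale A: side PA QA using PA QA by unfold_locales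
sublocale B: side PB QB using PB QB by unfold_locales

definition H :: "real \<Rightarrow> real^'n^'n" where "H w = H_SCI PA PB QA QB w"

lemma H_eq: "H w = w *\<^sub>R A.F w + (1 - w) *\<^sub>R B.F (1 - w)"
  unfolding H_def H_SCI_def A.F_def B.F_def by simp

definition h :: "real \<Rightarrow> real^'n \<Rightarrow> real" where "h w x = x \<bullet> (H w *v x)"

lemma h_eq: "h w x = w * (x \<bullet> (A.F w *v x)) + (1 - w) * (x \<bullet> (B.F (1 - w) *v x))"
  unfolding h_def H_eq
  by (simp add: matrix_vector_mult_add_rdistrib scaleR_matrix_vector_assoc[symmetric] inner_add_right)

lemma H_spd:
  assumes "0 \<le> w" "w \<le> 1" shows "spd (H w)"
  unfolding spd_def
proof (intro conjI allI impI)
  show "sym_mat (H w)" unfolding H_eq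
    using A.F_sym[of w] B.F_sym[of "1 - w"] assms by (intro sym_add sym_scale) auto
  fix x :: "real^'n" assume x: "x \<noteq> 0"
  have a: "x \<bullet> (A.F w *v x) > 0" using spd_pos[OF A.F_spd x] assms by simp
  have b: "x \<bullet> (B.F (1 - w) *v x) > 0" using spd_pos[OF B.F_spd x] assms by simp
  have "w * (x \<bullet> (A.F w *v x)) + (1 - w) * (x \<bullet> (B.F (1 - w) *v x)) > 0"
  proof (cases "w = 0")
    case True then show ?thesis using b by simp
  next
    case False
    then have "w * (x \<bullet> (A.F w *v x)) > 0" using a assms by simp
    moreover have "(1 - w) * (x \<bullet> (B.F (1 - w) *v x)) \<ge> 0" using b assms by simp
    ultimately show ?thesis by linarith
  qed
  then show "x \<bullet> (H w *v x) > 0" using h_eq h_def by simp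
qed

definition q :: "real \<Rightarrow> real^'n \<Rightarrow> real" where "q w x = A.pi w x - B.pi (1 - w) x"

definition Nq :: "real \<Rightarrow> real^'n^'n" where "Nq w = A.Nm w - B.Nm (1 - w)"

lemma Nq_sym: "0 \<le> w \<Longrightarrow> w \<le> 1 \<Longrightarrow> sym_mat (Nq w)"
  unfolding Nq_def using A.Nm_sym[of w] B.Nm_sym[of "1 - w"] by (intro sym_diff) auto

lemma q_Nq: "0 \<le> w \<Longrightarrow> w \<le> 1 \<Longrightarrow> q w x = x \<bullet> (Nq w *v x)"
  unfolding q_def Nq_def using A.pi_Nm[of w x] B.pi_Nm[of "1 - w" x]
  by (simp add: matrix_vector_mult_diff_rdistrib inner_diff_right)

definition rr :: "real \<Rightarrow> real \<Rightarrow> real^'n \<Rightarrow> real" where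
  "rr w1 w2 x = A.rho w1 w2 x + B.rho (1 - w1) (1 - w2) x"

lemma T_sci:
  assumes "0 \<le> w1" "w1 \<le> 1" "0 \<le> w2" "w2 \<le> 1"
  shows "h w2 x - h w1 x = (w2 - w1) * q w1 x - (w2 - w1)^2 * rr w1 w2 x"
proof -
  have ta: "w2 * (x \<bullet> (A.F w2 *v x)) - w1 * (x \<bullet> (A.F w1 *v x)) = (w2 - w1) * A.pi w1 x - (w2 - w1)^2 * A.rho w1 w2 x"
    using A.T_identity assms by simp
  have tb: "(1 - w2) * (x \<bullet> (B.F (1 - w2) *v x)) - (1 - w1) * (x \<bullet> (B.F (1 - w1) *v x))
     = ((1 - w2) - (1 - w1)) * B.pi (1 - w1) x - ((1 - w2) - (1 - w1))^2 * B.rho (1 - w1) (1 - w2) x"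
    using B.T_identity assms by simp
  show ?thesis unfolding h_eq q_def rr_def using ta tb by (simp add: algebra_simps power2_eq_square)
qed

lemma rr_nonneg: "0 \<le> w1 \<Longrightarrow> w1 \<le> 1 \<Longrightarrow> 0 \<le> w2 \<Longrightarrow> w2 \<le> 1 \<Longrightarrow> 0 \<le> rr w1 w2 x"
  unfolding rr_def using A.rho_nonneg[of w1 w2 x] B.rho_nonneg[of "1 - w1" "1 - w2" x] by simp

lemma T_le:
  assumes "0 \<le> w1" "w1 \<le> 1" "0 \<le> w2" "w2 \<le> 1"
  shows "h w2 x - h w1 x \<le> (w2 - w1) * q w1 x"
  using T_sci[OF assms, of x] rr_nonneg[OF assms, of x] by (simp add: mult_nonneg_nonneg)

lemma q_strict:
  assumes "0 \<le> w1" "w1 < w2" "w2 \<le> 1" "x \<noteq> 0"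
  shows "q w2 x < q w1 x"
proof -
  have "A.pi w2 x < A.pi w1 x" using A.pi_strict assms by simp
  moreover have "B.pi (1 - w1) x \<le> B.pi (1 - w2) x" using B.pi_mono[of "1 - w2" "1 - w1" x] assms by simp
  ultimately show ?thesis unfolding q_def by simp
qed

lemma q_lipschitz: "\<exists>K>0. \<forall>w1 w2. 0 \<le> w1 \<longrightarrow> w1 \<le> 1 \<longrightarrow> 0 \<le> w2 \<longrightarrow> w2 \<le> 1 \<longrightarrow> q w1 x - q w2 x \<le> K * \<bar>w2 - w1\<bar>"
proof -
  obtain KA where KA: "\<forall>s1 s2. 0 \<le> s1 \<longrightarrow> 0 \<le> s2 \<longrightarrow> A.rho s1 s2 x \<le> KA" using A.rho_bound by blast
  obtain KB where KB: "\<forall>s1 s2. 0 \<le> s1 \<longrightarrow> 0 \<le> s2 \<longrightarrow> B.rho s1 s2 x \<le> KB" using B.rho_bound by blast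
  have "A.rho 0 0 x \<le> KA" using KA by simp
  then have KA0: "0 \<le> KA" using A.rho_nonneg[of 0 0 x] by simp
  have "B.rho 0 0 x \<le> KB" using KB by simp
  then have KB0: "0 \<le> KB" using B.rho_nonneg[of 0 0 x] by simp
  show ?thesis
  proof (intro exI[of _ "2 * KA + 2 * KB + 1"] conjI allI impI)
    fix w1 w2 :: real assume w: "0 \<le> w1" "w1 \<le> 1" "0 \<le> w2" "w2 \<le> 1"
    have da: "A.pi w1 x - A.pi w2 x = (w2 - w1) * (A.rho w1 w2 x + A.rho w2 w1 x)" using A.pi_diff w by simp
    have db: "B.pi (1 - w2) x - B.pi (1 - w1) x = ((1 - w1) - (1 - w2)) * (B.rho (1 - w2) (1 - w1) x + B.rho (1 - w1) (1 - w2) x)"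
      using B.pi_diff w by simp
    have ra: "\<bar>A.rho w1 w2 x + A.rho w2 w1 x\<bar> \<le> 2 * KA"
    proof -
      have "A.rho w1 w2 x \<le> KA" "A.rho w2 w1 x \<le> KA" "0 \<le> A.rho w1 w2 x" "0 \<le> A.rho w2 w1 x"
        using KA A.rho_nonneg w by auto
      then show ?thesis by linarith
    qed
    have rb: "\<bar>B.rho (1 - w2) (1 - w1) x + B.rho (1 - w1) (1 - w2) x\<bar> \<le> 2 * KB"
    proof -
      have "B.rho (1 - w2) (1 - w1) x \<le> KB" "B.rho (1 - w1) (1 - w2) x \<le> KB"
        "0 \<le> B.rho (1 - w2) (1 - w1) x" "0 \<le> B.rho (1 - w1) (1 - w2) x"
        using KB B.rho_nonneg w by auto
      then show ?thesis by linarith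
    qed
    have "q w1 x - q w2 x = (A.pi w1 x - A.pi w2 x) + (B.pi (1 - w2) x - B.pi (1 - w1) x)"
      unfolding q_def by simp
    also have "\<dots> \<le> \<bar>w2 - w1\<bar> * (2 * KA) + \<bar>w2 - w1\<bar> * (2 * KB)"
    proof -
      have "A.pi w1 x - A.pi w2 x \<le> \<bar>(w2 - w1) * (A.rho w1 w2 x + A.rho w2 w1 x)\<bar>"
        unfolding da by (rule abs_ge_self)
      also have "\<dots> = \<bar>w2 - w1\<bar> * \<bar>A.rho w1 w2 x + A.rho w2 w1 x\<bar>" by (rule abs_mult)
      also have "\<dots> \<le> \<bar>w2 - w1\<bar> * (2 * KA)" by (rule mult_left_mono[OF ra abs_ge_zero])
      finally have "A.pi w1 x - A.pi w2 x \<le> \<bar>w2 - w1\<bar> * (2 * KA)" .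
      moreover have "B.pi (1 - w2) x - B.pi (1 - w1) x \<le> \<bar>w2 - w1\<bar> * (2 * KB)"
      proof -
        have e: "\<bar>(1 - w1) - (1 - w2)\<bar> = \<bar>w2 - w1\<bar>" by simp
        have "B.pi (1 - w2) x - B.pi (1 - w1) x \<le> \<bar>((1 - w1) - (1 - w2)) * (B.rho (1 - w2) (1 - w1) x + B.rho (1 - w1) (1 - w2) x)\<bar>"
          unfolding db by (rule abs_ge_self)
        also have "\<dots> = \<bar>w2 - w1\<bar> * \<bar>B.rho (1 - w2) (1 - w1) x + B.rho (1 - w1) (1 - w2) x\<bar>"
          unfolding abs_mult e ..
        also have "\<dots> \<le> \<bar>w2 - w1\<bar> * (2 * KB)" by (rule mult_left_mono[OF rb abs_ge_zero])
        finally show ?thesis .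
      qed
      ultimately show ?thesis by simp
    qed
    also have "\<dots> \<le> (2 * KA + 2 * KB + 1) * \<bar>w2 - w1\<bar>" by (simp add: algebra_simps)
    finally show "q w1 x - q w2 x \<le> (2 * KA + 2 * KB + 1) * \<bar>w2 - w1\<bar>" .
  qed (use KA0 KB0 in simp)
qed

lemma L_pd:
  assumes w: "0 \<le> w" "w < 1" and pos: "\<forall>x. x \<noteq> 0 \<longrightarrow> q w x > 0"
  shows "\<exists>w2. w < w2 \<and> w2 \<le> 1 \<and> (\<forall>x. x \<noteq> 0 \<longrightarrow> h w x < h w2 x)"
proof -
  have "\<forall>x. x \<noteq> 0 \<longrightarrow> x \<bullet> (Nq w *v x) > 0" using pos q_Nq w by simp
  then obtain m where m: "m > 0" "\<forall>x. m * (x \<bullet> x) \<le> x \<bullet> (Nq w *v x)" using quad_lower by blast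
  define MM where "MM = A.F w ** QA ** A.F w + B.F (1 - w) ** QB ** B.F (1 - w)"
  obtain M where M: "M > 0" "\<forall>x. x \<bullet> (MM *v x) \<le> M * (x \<bullet> x)" using quad_upper by blast
  have rrb: "rr w w2 x \<le> M * (x \<bullet> x)" if "0 \<le> w2" "w2 \<le> 1" for w2 x
  proof -
    have "rr w w2 x \<le> (A.F w *v x) \<bullet> (QA *v (A.F w *v x)) + (B.F (1 - w) *v x) \<bullet> (QB *v (B.F (1 - w) *v x))"
      unfolding rr_def using A.rho_upper[of w w2 x] B.rho_upper[of "1 - w" "1 - w2" x] that w
      by (intro add_mono) auto
    also have "\<dots> = x \<bullet> (MM *v x)" unfolding MM_def
      using A.F_quad[of w x] B.F_quad[of "1 - w" x] w
      by (simp add: matrix_vector_mult_add_rdistrib inner_add_right)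
    also have "\<dots> \<le> M * (x \<bullet> x)" using M by blast
    finally show ?thesis .
  qed
  define d where "d = min (1 - w) (m / (2 * M))"
  have d: "0 < d" "d \<le> 1 - w" "d * M \<le> m / 2" using m M w unfolding d_def
    by (auto simp: min_def field_simps)
  show ?thesis
  proof (intro exI[of _ "w + d"] conjI allI impI)
    show "w < w + d" "w + d \<le> 1" using d by auto
    fix x :: "real^'n" assume x: "x \<noteq> 0"
    have xx: "x \<bullet> x > 0" using x by simp
    have "h (w + d) x - h w x = d * q w x - d^2 * rr w (w + d) x"
      using T_sci[of w "w + d" x] w d by simp
    also have "\<dots> \<ge> d * (m * (x \<bullet> x)) - d^2 * (M * (x \<bullet> x))"
    proof -
      have "d * (m * (x \<bullet> x)) \<le> d * q w x" using m q_Nq[of w x] w d by (intro mult_left_mono) auto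
      moreover have "d^2 * rr w (w + d) x \<le> d^2 * (M * (x \<bullet> x))"
        using rrb[of "w + d" x] w d by (intro mult_left_mono) auto
      ultimately show ?thesis by linarith
    qed
    finally have "h (w + d) x - h w x \<ge> d * (x \<bullet> x) * (m - d * M)" by (simp add: algebra_simps power2_eq_square)
    moreover have "d * (x \<bullet> x) * (m - d * M) > 0" using d xx m by (intro mult_pos_pos) auto
    ultimately show "h w x < h (w + d) x" by linarith
  qed
qed

lemma quartic_up:
  assumes w: "0 \<le> w" "w < 1"
    and qpsd: "\<forall>x. 0 \<le> q w x"
    and x1: "q w x1 = 0" and x1nz: "x1 \<noteq> 0"
    and Dsym: "sym_mat D" and Dpsd: "\<forall>x. 0 \<le> x \<bullet> (D *v x)" and Dx1: "D *v x1 = 0"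
    and hyp: "\<forall>w2 x. w \<le> w2 \<longrightarrow> w2 < 1 \<longrightarrow> q w2 x = 0 \<longrightarrow> x \<bullet> (D *v x) \<le> h w2 x - h w x"
  shows "v \<bullet> (D *v v) \<le> 0"
proof -
  have w1: "w \<le> 1" using w by simp
  have Nx1: "Nq w *v x1 = 0"
    using psd_kernel[OF Nq_sym[OF w(1) w1]] qpsd x1 q_Nq[OF w(1) w1] by simp
  have Dexp: "(r *\<^sub>R x1 + v) \<bullet> (D *v (r *\<^sub>R x1 + v)) = v \<bullet> (D *v v)" for r
    using quad_expand[OF Dsym, of r x1 v] Dx1 sym_dot[OF Dsym, of x1 v] by simp
  have qexp: "q w (r *\<^sub>R x1 + v) = q w v" for r
    using quad_expand[OF Nq_sym[OF w(1) w1], of r x1 v] Nx1 sym_dot[OF Nq_sym[OF w(1) w1], of x1 v]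
      q_Nq[OF w(1) w1] by simp
  show ?thesis
  proof (cases "q w v = 0")
    case True
    then have "q w (1 *\<^sub>R x1 + v) = 0" using qexp[of 1] by simp
    then have "(1 *\<^sub>R x1 + v) \<bullet> (D *v (1 *\<^sub>R x1 + v)) \<le> h w (1 *\<^sub>R x1 + v) - h w (1 *\<^sub>R x1 + v)"
      using hyp w by blast
    then show ?thesis using Dexp[of 1] by simp
  next
    case False
    then have a: "q w v > 0" using qpsd by (metis order_le_less)
    obtain K where K: "K > 0" "\<forall>w1 w2. 0 \<le> w1 \<longrightarrow> w1 \<le> 1 \<longrightarrow> 0 \<le> w2 \<longrightarrow> w2 \<le> 1 \<longrightarrow> q w1 v - q w2 v \<le> K * \<bar>w2 - w1\<bar>"
      using q_lipschitz by blast
    have key: "v \<bullet> (D *v v) \<le> d * q w v" if d: "0 < d" "d \<le> (1 - w) / 2" "d \<le> q w v / K" for d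
    proof -
      define w2 where "w2 = w + d"
      have w2: "w < w2" "w2 < 1" "0 \<le> w2" "w2 \<le> 1" using d w unfolding w2_def by auto
      have al: "q w2 x1 < 0" using q_strict[of w w2 x1] w2 w x1 x1nz by simp
      have "q w v - q w2 v \<le> K * \<bar>w2 - w\<bar>" using K(2) w w2 by (meson less_imp_le)
      also have "\<dots> = K * d" unfolding w2_def using d by simp
      also have "\<dots> \<le> q w v" using d K by (simp add: field_simps)
      finally have ga: "0 \<le> q w2 v" by simp
      define \<beta> where "\<beta> = x1 \<bullet> (Nq w2 *v v)"
      have "q w2 x1 * q w2 v \<le> 0" using al ga by (simp add: mult_nonpos_nonneg)
      also have "0 \<le> \<beta>^2" by simp
      finally obtain r where r: "q w2 x1 * r^2 + 2 * \<beta> * r + q w2 v = 0"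
        using quad_root[of "q w2 x1" "q w2 v" \<beta>] al by auto
      define y where "y = r *\<^sub>R x1 + v"
      have "q w2 y = q w2 x1 * r^2 + 2 * \<beta> * r + q w2 v"
        unfolding y_def \<beta>_def using quad_expand[OF Nq_sym[OF w2(3) w2(4)], of r x1 v] q_Nq[OF w2(3) w2(4)]
        by (simp add: algebra_simps)
      then have "q w2 y = 0" using r by simp
      then have "y \<bullet> (D *v y) \<le> h w2 y - h w y" using hyp w2 by auto
      also have "\<dots> \<le> (w2 - w) * q w y" using T_le[of w w2 y] w w2 by simp
      also have "\<dots> = d * q w v" unfolding w2_def y_def qexp by simp
      finally show ?thesis unfolding y_def Dexp .
    qed
    show ?thesis
    proof (rule ccontr)
      assume "\<not> v \<bullet> (D *v v) \<le> 0"
      then have vd: "v \<bullet> (D *v v) > 0" by simp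
      define d where "d = min (min ((1 - w) / 2) (q w v / K)) (v \<bullet> (D *v v) / (2 * q w v))"
      have d0: "0 < d" unfolding d_def using w a K vd by simp
      have d1: "d \<le> (1 - w) / 2" unfolding d_def by (meson min.cobounded1 order_trans)
      have d2: "d \<le> q w v / K" unfolding d_def by (meson min.cobounded1 min.cobounded2 order_trans)
      have d3: "d \<le> v \<bullet> (D *v v) / (2 * q w v)" unfolding d_def by (rule min.cobounded2)
      note d = d0 d1 d2 d3
      have "v \<bullet> (D *v v) \<le> d * q w v" using key d by blast
      also have "\<dots> \<le> v \<bullet> (D *v v) / (2 * q w v) * q w v" using d a by (intro mult_right_mono) auto
      also have "\<dots> = v \<bullet> (D *v v) / 2" using a by simp
      finally show False using vd by simp
    qed
  qed
qed

end


lemma sum_Plus_UNIV: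
  fixes g :: "'a::finite + 'b::finite \<Rightarrow> real"
  shows "sum g UNIV = sum (\<lambda>i. g (Inl i)) UNIV + sum (\<lambda>i. g (Inr i)) UNIV"
proof -
  have "sum g (UNIV <+> UNIV) = sum (g \<circ> Inl) UNIV + sum (g \<circ> Inr) UNIV" by (rule sum.Plus) auto
  then show ?thesis by (simp add: comp_def)
qed

definition vl :: "real^('n+'n) \<Rightarrow> real^'n" where "vl z = (\<chi> i. z $ Inl i)"
definition vr :: "real^('n+'n) \<Rightarrow> real^'n" where "vr z = (\<chi> i. z $ Inr i)"
definition vjoin :: "real^'n \<Rightarrow> real^'n \<Rightarrow> real^('n+'n)" where
  "vjoin u v = (\<chi> k. case k of Inl i \<Rightarrow> u $ i | Inr i \<Rightarrow> v $ i)"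

lemma vl_join [simp]: "vl (vjoin u v) = u" and vr_join [simp]: "vr (vjoin u v) = v"
  by (simp_all add: vl_def vr_def vjoin_def vec_eq_iff)

lemma block2_mv:
  fixes A M B :: "real^'n^'n"
  shows "vl (block2 A M B *v z) = A *v vl z + M *v vr z"
    and "vr (block2 A M B *v z) = transpose M *v vl z + B *v vr z"
  by (simp_all add: vl_def vr_def vec_eq_iff matrix_vector_mult_def block2_def sum_Plus_UNIV)

lemma inner_Plus: "(z::real^('n::finite+'n)) \<bullet> w = vl z \<bullet> vl w + vr z \<bullet> vr w"
  by (simp add: inner_vec_def sum_Plus_UNIV vl_def vr_def)

lemma block_quad:
  fixes A M B :: "real^'n^'n"
  shows "z \<bullet> (block2 A M B *v z) = vl z \<bullet> (A *v vl z) + 2 * (vl z \<bullet> (M *v vr z)) + vr z \<bullet> (B *v vr z)"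
proof -
  have "vr z \<bullet> (transpose M *v vl z) = vl z \<bullet> (M *v vr z)"
    by (rule dot_transposeT)
  then show ?thesis unfolding inner_Plus[of z] block2_mv by (simp add: inner_add_right)
qed

lemma block2_sym:
  fixes A M B :: "real^'n^'n"
  assumes "sym_mat A" "sym_mat B"
  shows "sym_mat (block2 A M B)"
proof -
  have a: "A $ j $ i = A $ i $ j" for i j using assms(1) unfolding sym_mat_def transpose_def
    by (metis vec_lambda_beta)
  have b: "B $ j $ i = B $ i $ j" for i j using assms(2) unfolding sym_mat_def transpose_def
    by (metis vec_lambda_beta)
  show ?thesis unfolding sym_mat_def transpose_def block2_def
    by (auto simp: vec_eq_iff a b split: sum.splits)
qed

context sci
begin

definition CA where "CA = PA + QA"
definition CB where "CB = PB + QB"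

lemma CA_sym: "sym_mat CA" unfolding CA_def using PA QA by (simp add: sym_add spd_sym)
lemma CB_sym: "sym_mat CB" unfolding CB_def using PB QB by (simp add: sym_add spd_sym)

definition Phi0 :: "real^'n^'n \<Rightarrow> real^'n \<Rightarrow> real^'n \<Rightarrow> real" where
  "Phi0 P u v = u \<bullet> (PA *v u) + 2 * (u \<bullet> (P *v v)) + v \<bullet> (PB *v v)"

definition Phi :: "real^'n^'n \<Rightarrow> real^'n \<Rightarrow> real^'n \<Rightarrow> real" where
  "Phi P u v = u \<bullet> (CA *v u) + 2 * (u \<bullet> (P *v v)) + v \<bullet> (CB *v v)"

lemma Phi_decomp: "Phi P u v = Phi0 P u v + u \<bullet> (QA *v u) + v \<bullet> (QB *v v)"
  unfolding Phi_def Phi0_def CA_def CB_def by (simp add: matrix_vector_mult_add_rdistrib inner_add_right)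

lemma A_Split_iff: "P \<in> A_Split PA PB \<longleftrightarrow> (\<forall>u v. 0 \<le> Phi0 P u v)"
proof
  assume "P \<in> A_Split PA PB"
  then have h: "\<forall>z. 0 \<le> z \<bullet> (block2 PA P PB *v z)" unfolding A_Split_def psd_def by simp
  show "\<forall>u v. 0 \<le> Phi0 P u v"
  proof (intro allI)
    fix u v :: "real^'n"
    show "0 \<le> Phi0 P u v" using h[rule_format, of "vjoin u v"] unfolding block_quad Phi0_def by simp
  qed
next
  assume h: "\<forall>u v. 0 \<le> Phi0 P u v"
  have "sym_mat (block2 PA P PB)" using block2_sym spd_sym PA PB by blast
  moreover have "\<forall>z. 0 \<le> z \<bullet> (block2 PA P PB *v z)"
    using h unfolding block_quad Phi0_def by simp
  ultimately show "P \<in> A_Split PA PB" unfolding A_Split_def psd_def by simp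
qed

lemma Phi_nonneg: "P \<in> A_Split PA PB \<Longrightarrow> 0 \<le> Phi P u v"
  unfolding Phi_decomp using A_Split_iff spd_nonneg[OF QA] spd_nonneg[OF QB]
  by (metis add_nonneg_nonneg)

lemma Phi_bilin:
  "Phi P (u - s) (v - t) = Phi P u v - 2 * (u \<bullet> (CA *v s + P *v t) + v \<bullet> (transpose P *v s + CB *v t)) + Phi P s t"
proof -
  have c1: "s \<bullet> (CA *v u) = u \<bullet> (CA *v s)" using sym_dot[OF CA_sym] .
  have c2: "t \<bullet> (CB *v v) = v \<bullet> (CB *v t)" using sym_dot[OF CB_sym] .
  have c3: "s \<bullet> (P *v v) = v \<bullet> (transpose P *v s)"
    by (rule dot_transposeT[symmetric])
  show ?thesis unfolding Phi_def
    using c1 c2 c3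
    by (simp add: matrix_vector_mult_diff_distrib inner_diff_left inner_diff_right inner_add_right algebra_simps
        del: transpose_matrix_vector)
qed

definition Rm :: "real^'n^'n \<Rightarrow> real^'n^'n" where "Rm P = CA + CB - P - transpose P"
definition KA :: "real^'n^'n \<Rightarrow> real^'n^'n" where "KA P = (CB - transpose P) ** matrix_inv (Rm P)"
definition Cf :: "real^'n^'n \<Rightarrow> real^'n^'n" where "Cf P = C_F_opt PA PB QA QB P"

lemma Cf_unfold: "Cf P = C_F CA CB (KA P) (mat 1 - KA P) P"
  unfolding Cf_def C_F_opt_def Let_def KA_def Rm_def CA_def CB_def ..

lemma Rm_quad: "y \<bullet> (Rm P *v y) = Phi P y (- y)"
  unfolding Rm_def Phi_def
  using dot_transposeT[of y P y]
  by (simp add: matrix_vector_mult_diff_rdistrib matrix_vector_mult_add_rdistrib inner_diff_right inner_add_right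
      mv_neg del: transpose_matrix_vector)

lemma Rm_sym: "sym_mat (Rm P)"
  using CA_sym CB_sym unfolding Rm_def sym_mat_def by (simp add: transpose_add transpose_diff algebra_simps)

lemma Rm_spd:
  assumes "P \<in> A_Split PA PB" shows "spd (Rm P)"
  unfolding spd_def
proof (intro conjI allI impI)
  show "sym_mat (Rm P)" by (rule Rm_sym)
  fix y :: "real^'n" assume "y \<noteq> 0"
  have "0 \<le> Phi0 P y (- y)" using assms A_Split_iff by blast
  moreover have "0 < y \<bullet> (QA *v y)" using spd_pos[OF QA \<open>y \<noteq> 0\<close>] .
  moreover have "0 \<le> (- y) \<bullet> (QB *v (- y))" using spd_nonneg[OF QB] .
  ultimately show "0 < y \<bullet> (Rm P *v y)" unfolding Rm_quad Phi_decomp by linarith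
qed

definition u0 :: "real^'n^'n \<Rightarrow> real^'n \<Rightarrow> real^'n" where
  "u0 P y = matrix_inv (Rm P) *v ((CB - P) *v y)"

lemma KA_T:
  assumes "P \<in> A_Split PA PB"
  shows "transpose (KA P) *v y = u0 P y"
proof -
  have inv: "invertible (Rm P)" using spd_invertible[OF Rm_spd[OF assms]] .
  have si: "transpose (matrix_inv (Rm P)) = matrix_inv (Rm P)"
    using inv_sym[OF Rm_sym inv] unfolding sym_mat_def .
  have "transpose (KA P) = matrix_inv (Rm P) ** (CB - P)"
    unfolding KA_def matrix_transpose_mul si transpose_diff using CB_sym unfolding sym_mat_def by simp
  then show ?thesis unfolding u0_def by (simp add: matrix_vector_mul_assoc del: transpose_matrix_vector)
qed

lemma R_u0:
  assumes "P \<in> A_Split PA PB"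
  shows "Rm P *v u0 P y = (CB - P) *v y"
  unfolding u0_def using inv_mv(1)[OF spd_invertible[OF Rm_spd[OF assms]]] .

lemma CF_quad:
  "y \<bullet> (C_F CA CB LA LB P *v y) = Phi P (transpose LA *v y) (transpose LB *v y)"
proof -
  have g: "y \<bullet> ((L ** M ** transpose N) *v y) = (transpose L *v y) \<bullet> (M *v (transpose N *v y))"
    for L M N :: "real^'n^'n"
    by (simp only: matrix_vector_mul_assoc[symmetric] dot_transpose[of y L])
  have c: "(transpose LB *v y) \<bullet> (transpose P *v (transpose LA *v y)) = (transpose LA *v y) \<bullet> (P *v (transpose LB *v y))"
    by (rule dot_transposeT)
  show ?thesis unfolding C_F_def Phi_def
    by (simp only: matrix_vector_mult_add_rdistrib inner_add_right g c)
qed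

lemma Cf_quad:
  assumes "P \<in> A_Split PA PB"
  shows "y \<bullet> (Cf P *v y) = Phi P (u0 P y) (y - u0 P y)"
proof -
  have "transpose (mat 1 - KA P) *v y = y - transpose (KA P) *v y"
    by (simp only: transpose_diff transpose_mat matrix_vector_mult_diff_rdistrib matrix_vector_mul_lid)
  then show ?thesis unfolding Cf_unfold CF_quad KA_T[OF assms] by (simp del: transpose_matrix_vector)
qed

lemma psi: "Phi P u (y - u) = u \<bullet> (Rm P *v u) - 2 * (u \<bullet> ((CB - P) *v y)) + y \<bullet> (CB *v y)"
proof -
  have c1: "y \<bullet> (CB *v u) = u \<bullet> (CB *v y)" using sym_dot[OF CB_sym] .
  have c2: "u \<bullet> (transpose P *v u) = u \<bullet> (P *v u)" using dot_transposeT[of u P u] .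
  show ?thesis unfolding Phi_def Rm_def using c1 c2
    by (simp add: matrix_vector_mult_diff_distrib matrix_vector_mult_diff_rdistrib matrix_vector_mult_add_rdistrib
        inner_diff_left inner_diff_right inner_add_right algebra_simps del: transpose_matrix_vector)
qed

lemma Cf_min:
  assumes "P \<in> A_Split PA PB"
  shows "y \<bullet> (Cf P *v y) \<le> Phi P u (y - u)"
proof -
  define a where "a = u0 P y"
  have Ra: "Rm P *v a = (CB - P) *v y" unfolding a_def by (rule R_u0[OF assms])
  have sR: "\<And>s t. s \<bullet> (Rm P *v t) = t \<bullet> (Rm P *v s)" using sym_dot[OF Rm_sym] by blast
  have "Phi P u (y - u) - Phi P a (y - a) = (u - a) \<bullet> (Rm P *v (u - a))"
    unfolding psi Ra[symmetric] using sR[of a u]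
    by (simp add: matrix_vector_mult_diff_distrib inner_diff_left inner_diff_right algebra_simps)
  moreover have "0 \<le> (u - a) \<bullet> (Rm P *v (u - a))" using spd_nonneg[OF Rm_spd[OF assms]] .
  ultimately show ?thesis unfolding Cf_quad[OF assms] a_def by simp
qed

lemma CF_sym:
  assumes "sym_mat CA'" "sym_mat CB'"
  shows "sym_mat (C_F CA' CB' LA LB P)"
  using assms unfolding sym_mat_def C_F_def
  by (simp add: transpose_add matrix_transpose_mul matrix_mul_assoc algebra_simps)

lemma Cf_spd:
  assumes "P \<in> A_Split PA PB"
  shows "spd (Cf P)"
  unfolding spd_def
proof (intro conjI allI impI)
  show "sym_mat (Cf P)" unfolding Cf_unfold by (rule CF_sym[OF CA_sym CB_sym])
  fix y :: "real^'n" assume y: "y \<noteq> 0"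
  define a where "a = u0 P y"
  have "0 \<le> Phi0 P a (y - a)" using assms A_Split_iff by blast
  moreover have "0 < a \<bullet> (QA *v a) + (y - a) \<bullet> (QB *v (y - a))"
  proof (cases "a = 0")
    case True then show ?thesis using spd_pos[OF QB y] by simp
  next
    case False then show ?thesis using spd_pos[OF QA False] spd_nonneg[OF QB, of "y - a"] by linarith
  qed
  ultimately show "0 < y \<bullet> (Cf P *v y)" unfolding Cf_quad[OF assms] Phi_decomp a_def[symmetric] by linarith
qed

end


lemma inv_lower:
  fixes C :: "real^'n^'n"
  assumes "spd C"
  shows "2 * (x \<bullet> y) - y \<bullet> (C *v y) \<le> x \<bullet> (matrix_inv C *v x)"
proof -
  define z where "z = matrix_inv C *v x"
  have Cz: "C *v z = x" unfolding z_def using inv_mv(1)[OF spd_invertible[OF assms]] .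
  have s: "y \<bullet> (C *v z) = z \<bullet> (C *v y)" using sym_dot[OF spd_sym[OF assms]] .
  have "0 \<le> (y - z) \<bullet> (C *v (y - z))" using spd_nonneg[OF assms] .
  also have "\<dots> = y \<bullet> (C *v y) - 2 * (y \<bullet> (C *v z)) + z \<bullet> (C *v z)"
    using s by (simp add: matrix_vector_mult_diff_distrib inner_diff_left inner_diff_right)
  finally have "0 \<le> y \<bullet> (C *v y) - 2 * (y \<bullet> x) + z \<bullet> x" unfolding Cz .
  then show ?thesis using inner_commute[of y x] inner_commute[of z x] unfolding z_def by linarith
qed

lemma inv_eq:
  fixes C :: "real^'n^'n" and x :: "real^'n"
  assumes "spd C"
  defines "z \<equiv> matrix_inv C *v x"
  shows "x \<bullet> (matrix_inv C *v x) = 2 * (x \<bullet> z) - z \<bullet> (C *v z)"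
proof -
  have Cz: "C *v z = x" unfolding z_def using inv_mv(1)[OF spd_invertible[OF assms(1)]] .
  show ?thesis unfolding Cz using inner_commute[of z x] by (simp add: z_def)
qed

definition outer :: "real^'n \<Rightarrow> real^'n \<Rightarrow> real^'n^'n" where
  "outer u v = (\<chi> i j. u $ i * v $ j)"

lemma outer_mv: "outer u v *v w = (v \<bullet> w) *\<^sub>R u"
  by (simp add: outer_def matrix_vector_mult_def inner_vec_def vec_eq_iff sum_distrib_left algebra_simps)

lemma outer_T: "transpose (outer u v) *v w = (u \<bullet> w) *\<^sub>R v"
  by (simp add: outer_def transpose_def matrix_vector_mult_def inner_vec_def vec_eq_iff sum_distrib_left
      algebra_simps del: transpose_matrix_vector)

lemma real_ineq:
  fixes U V X Y a b c :: real
  assumes "0 \<le> U" "0 \<le> V" "X^2 \<le> U * a" "Y^2 \<le> V * b" "0 \<le> a" "0 \<le> b" "0 \<le> c" "c^2 * a * b \<le> 1"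
  shows "0 \<le> U + 2 * c * X * Y + V"
proof -
  have "(c * X * Y)^2 = c^2 * X^2 * Y^2" by (simp add: power_mult_distrib)
  also have "\<dots> \<le> c^2 * (U * a) * (V * b)"
    using assms by (intro mult_mono) (auto intro: mult_nonneg_nonneg)
  also have "\<dots> = (c^2 * a * b) * (U * V)" by simp
  also have "\<dots> \<le> 1 * (U * V)" using assms by (intro mult_right_mono) auto
  finally have h: "(2 * c * X * Y)^2 \<le> 4 * (U * V)" by (simp add: power_mult_distrib)
  have "(U + V)^2 - 4 * (U * V) = (U - V)^2" by (simp add: power2_eq_square algebra_simps)
  then have "4 * (U * V) \<le> (U + V)^2" by (metis diff_ge_0_iff_ge zero_le_power2)
  then have "(2 * c * X * Y)^2 \<le> (U + V)^2" using h by linarith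
  then have "\<bar>2 * c * X * Y\<bar> \<le> \<bar>U + V\<bar>" using abs_le_square_iff by blast
  then show ?thesis using assms by linarith
qed

context sci
begin

lemma cons:
  assumes P: "P \<in> A_Split PA PB" and w: "0 \<le> w" "w \<le> 1"
  shows "h w x \<le> x \<bullet> (matrix_inv (Cf P) *v x)"
proof -
  define a where "a = A.F w *v x"
  define b where "b = B.F (1 - w) *v x"
  have ea: "PA *v a + w *\<^sub>R (QA *v a) = x" unfolding a_def using A.F_eq w by simp
  have eb: "PB *v b + (1 - w) *\<^sub>R (QB *v b) = x" unfolding b_def using B.F_eq w by simp
  have xa: "x \<bullet> a = a \<bullet> (PA *v a) + w * (a \<bullet> (QA *v a))"
    using ea by (metis inner_add_left inner_scaleR_left inner_commute)
  have xb: "x \<bullet> b = b \<bullet> (PB *v b) + (1 - w) * (b \<bullet> (QB *v b))"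
    using eb by (metis inner_add_left inner_scaleR_left inner_commute)
  define u where "u = w *\<^sub>R a"
  define v where "v = (1 - w) *\<^sub>R b"
  have hx: "h w x = x \<bullet> (u + v)" unfolding h_eq u_def v_def a_def b_def by (simp add: inner_add_right)
  have Phi_eq: "Phi P u v = w^2 * (a \<bullet> (PA *v a) + a \<bullet> (QA *v a)) + 2 * w * (1 - w) * (a \<bullet> (P *v b))
        + (1 - w)^2 * (b \<bullet> (PB *v b) + b \<bullet> (QB *v b))"
    unfolding Phi_def u_def v_def CA_def CB_def
    by (simp add: matrix_vector_mult_scaleR matrix_vector_mult_add_rdistrib inner_add_right power2_eq_square algebra_simps)
  have P0: "Phi0 P a (- b) = a \<bullet> (PA *v a) - 2 * (a \<bullet> (P *v b)) + b \<bullet> (PB *v b)"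
    unfolding Phi0_def by (simp add: mv_neg)
  have nn: "0 \<le> w * (1 - w) * Phi0 P a (- b)"
    using P A_Split_iff w by (intro mult_nonneg_nonneg) auto
  have hw: "h w x = w * (x \<bullet> a) + (1 - w) * (x \<bullet> b)" unfolding h_eq a_def b_def ..
  have "h w x - Phi P u v = w * (1 - w) * Phi0 P a (- b)"
    unfolding hw xa xb Phi_eq P0 by algebra
  then have Ph: "Phi P u v \<le> h w x" using nn by linarith
  have "(u + v) \<bullet> (Cf P *v (u + v)) \<le> Phi P u ((u + v) - u)" by (rule Cf_min[OF P])
  then have "(u + v) \<bullet> (Cf P *v (u + v)) \<le> h w x" using Ph by simp
  moreover have "2 * (x \<bullet> (u + v)) - (u + v) \<bullet> (Cf P *v (u + v)) \<le> x \<bullet> (matrix_inv (Cf P) *v x)"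
    by (rule inv_lower[OF Cf_spd[OF P]])
  ultimately show ?thesis unfolding hx by linarith
qed

lemma constr_bound:
  assumes P: "P \<in> A_Split PA PB"
    and e1: "CA *v uA + P *v uB = x" and e2: "transpose P *v uA + CB *v uB = x"
  shows "x \<bullet> (matrix_inv (Cf P) *v x) \<le> x \<bullet> (uA + uB)"
proof -
  define z where "z = matrix_inv (Cf P) *v x"
  define u where "u = u0 P z"
  define v where "v = z - u"
  have zc: "z \<bullet> (Cf P *v z) = Phi P u v" unfolding u_def v_def by (rule Cf_quad[OF P])
  have ie: "x \<bullet> (matrix_inv (Cf P) *v x) = 2 * (x \<bullet> z) - z \<bullet> (Cf P *v z)"
    unfolding z_def by (rule inv_eq[OF Cf_spd[OF P]])
  have pst: "Phi P uA uB = uA \<bullet> x + uB \<bullet> x"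
  proof -
    have "uA \<bullet> x = uA \<bullet> (CA *v uA) + uA \<bullet> (P *v uB)" using e1 by (metis inner_add_right)
    moreover have "uB \<bullet> x = uB \<bullet> (transpose P *v uA) + uB \<bullet> (CB *v uB)" using e2 by (metis inner_add_right)
    moreover have "uB \<bullet> (transpose P *v uA) = uA \<bullet> (P *v uB)" by (rule dot_transposeT)
    ultimately show ?thesis unfolding Phi_def by simp
  qed
  have "0 \<le> Phi P (u - uA) (v - uB)" by (rule Phi_nonneg[OF P])
  also have "\<dots> = Phi P u v - 2 * (u \<bullet> x + v \<bullet> x) + (uA \<bullet> x + uB \<bullet> x)"
    unfolding Phi_bilin e1 e2 pst ..
  finally have "2 * (u \<bullet> x + v \<bullet> x) - Phi P u v \<le> uA \<bullet> x + uB \<bullet> x" by simp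
  moreover have "u \<bullet> x + v \<bullet> x = x \<bullet> z" unfolding v_def using inner_commute[of z x] by (simp add: inner_diff_left)
  ultimately show ?thesis unfolding ie zc using inner_commute[of uA x] inner_commute[of uB x]
    by (simp add: inner_add_right)
qed

definition good :: "real \<Rightarrow> real^'n \<Rightarrow> bool" where
  "good w x \<longleftrightarrow> (\<exists>P\<in>A_Split PA PB. x \<bullet> (matrix_inv (Cf P) *v x) \<le> h w x)"

lemma zero_in_split: "0 \<in> A_Split PA PB"
  unfolding A_Split_iff Phi0_def using spd_nonneg[OF PA] spd_nonneg[OF PB] by simp

lemma construct:
  assumes w: "0 \<le> w" "w \<le> 1" and c: "0 \<le> c"
    and cab: "c^2 * ((A.F w *v x) \<bullet> (PA *v (A.F w *v x))) * ((B.F (1 - w) *v x) \<bullet> (PB *v (B.F (1 - w) *v x))) \<le> 1"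
    and c1: "(1 - w) * (c * ((B.F (1 - w) *v x) \<bullet> (PB *v (B.F (1 - w) *v x))) - 1) = 0"
    and c2: "w * (c * ((A.F w *v x) \<bullet> (PA *v (A.F w *v x))) - 1) = 0"
  shows "good w x"
proof -
  define a where "a = A.F w *v x"
  define b where "b = B.F (1 - w) *v x"
  define \<alpha> where "\<alpha> = a \<bullet> (PA *v a)"
  define \<beta> where "\<beta> = b \<bullet> (PB *v b)"
  have ea: "PA *v a + w *\<^sub>R (QA *v a) = x" unfolding a_def using A.F_eq w by simp
  have eb: "PB *v b + (1 - w) *\<^sub>R (QB *v b) = x" unfolding b_def using B.F_eq w by simp
  define P where "P = c *\<^sub>R outer (PA *v a) (PB *v b)"
  have Pv: "P *v y = (c * ((PB *v b) \<bullet> y)) *\<^sub>R (PA *v a)" for y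
    unfolding P_def by (simp add: scaleR_matrix_vector_assoc[symmetric] outer_mv)
  have PTv: "transpose P *v y = (c * ((PA *v a) \<bullet> y)) *\<^sub>R (PB *v b)" for y
    unfolding P_def transpose_scalar by (simp add: scaleR_matrix_vector_assoc[symmetric] outer_T del: transpose_matrix_vector)
  have al0: "0 \<le> \<alpha>" unfolding \<alpha>_def using spd_nonneg[OF PA] .
  have be0: "0 \<le> \<beta>" unfolding \<beta>_def using spd_nonneg[OF PB] .
  have split: "P \<in> A_Split PA PB"
    unfolding A_Split_iff
  proof (intro allI)
    fix u v :: "real^'n"
    have csA: "(u \<bullet> (PA *v a))^2 \<le> (u \<bullet> (PA *v u)) * \<alpha>"
      unfolding \<alpha>_def by (rule psd_cs[OF spd_sym[OF PA]]) (use spd_nonneg[OF PA] in blast)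
    have csB: "(v \<bullet> (PB *v b))^2 \<le> (v \<bullet> (PB *v v)) * \<beta>"
      unfolding \<beta>_def by (rule psd_cs[OF spd_sym[OF PB]]) (use spd_nonneg[OF PB] in blast)
    have "Phi0 P u v = u \<bullet> (PA *v u) + 2 * c * (u \<bullet> (PA *v a)) * (v \<bullet> (PB *v b)) + v \<bullet> (PB *v v)"
      unfolding Phi0_def Pv using inner_commute[of "PB *v b" v] by simp
    also have "0 \<le> \<dots>"
      using real_ineq[OF spd_nonneg[OF PA] spd_nonneg[OF PB] csA csB al0 be0 c] cab
      unfolding \<alpha>_def \<beta>_def a_def b_def by simp
    finally show "0 \<le> Phi0 P u v" .
  qed
  have E1: "CA *v (w *\<^sub>R a) + P *v ((1 - w) *\<^sub>R b) = x"
  proof -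
    have "P *v ((1 - w) *\<^sub>R b) = ((1 - w) * (c * \<beta>)) *\<^sub>R (PA *v a)"
      unfolding Pv \<beta>_def using inner_commute[of "PB *v b" b] by simp
    also have "(1 - w) * (c * \<beta>) = 1 - w" using c1 unfolding \<beta>_def b_def by (simp add: algebra_simps)
    finally have Pb: "P *v ((1 - w) *\<^sub>R b) = (1 - w) *\<^sub>R (PA *v a)" .
    have "CA *v (w *\<^sub>R a) = w *\<^sub>R (PA *v a) + w *\<^sub>R (QA *v a)"
      by (simp add: CA_def matrix_vector_mult_add_rdistrib matrix_vector_mult_scaleR scaleR_right_distrib)
    then have "CA *v (w *\<^sub>R a) + P *v ((1 - w) *\<^sub>R b) = PA *v a + w *\<^sub>R (QA *v a)"
      unfolding Pb by (simp add: algebra_simps)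
    then show ?thesis using ea by simp
  qed
  have E2: "transpose P *v (w *\<^sub>R a) + CB *v ((1 - w) *\<^sub>R b) = x"
  proof -
    have "transpose P *v (w *\<^sub>R a) = (w * (c * \<alpha>)) *\<^sub>R (PB *v b)"
      unfolding PTv \<alpha>_def using inner_commute[of "PA *v a" a] by simp
    also have "w * (c * \<alpha>) = w" using c2 unfolding \<alpha>_def a_def by (simp add: algebra_simps)
    finally have Pa: "transpose P *v (w *\<^sub>R a) = w *\<^sub>R (PB *v b)" .
    have "CB *v ((1 - w) *\<^sub>R b) = (1 - w) *\<^sub>R (PB *v b) + (1 - w) *\<^sub>R (QB *v b)"
      by (simp add: CB_def matrix_vector_mult_add_rdistrib matrix_vector_mult_scaleR scaleR_right_distrib)
    then have "transpose P *v (w *\<^sub>R a) + CB *v ((1 - w) *\<^sub>R b) = PB *v b + (1 - w) *\<^sub>R (QB *v b)"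
      unfolding Pa by (simp add: algebra_simps)
    then show ?thesis using eb by simp
  qed
  have "x \<bullet> (matrix_inv (Cf P) *v x) \<le> x \<bullet> (w *\<^sub>R a + (1 - w) *\<^sub>R b)"
    by (rule constr_bound[OF split E1 E2])
  also have "\<dots> = h w x" unfolding h_eq a_def b_def by (simp add: inner_add_right)
  finally show ?thesis unfolding good_def using split by blast
qed

lemma good_cases:
  assumes w: "0 \<le> w" "w \<le> 1"
    and cases: "q w x = 0 \<or> (w = 1 \<and> 0 \<le> q w x) \<or> (w = 0 \<and> q w x \<le> 0)"
  shows "good w x"
proof (cases "x = 0")
  case True
  have "x \<bullet> (matrix_inv (Cf 0) *v x) \<le> h w x" using True by (simp add: h_def)
  then show ?thesis unfolding good_def using zero_in_split by blast
next
  case False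
  define a where "a = A.F w *v x"
  define b where "b = B.F (1 - w) *v x"
  have a0: "a \<noteq> 0" unfolding a_def using A.F_zero[of w x] w False by blast
  have b0: "b \<noteq> 0" unfolding b_def using B.F_zero[of "1 - w" x] w False by force
  define \<alpha> where "\<alpha> = a \<bullet> (PA *v a)"
  define \<beta> where "\<beta> = b \<bullet> (PB *v b)"
  have al: "0 < \<alpha>" unfolding \<alpha>_def using spd_pos[OF PA a0] .
  have be: "0 < \<beta>" unfolding \<beta>_def using spd_pos[OF PB b0] .
  have qab: "q w x = \<alpha> - \<beta>" unfolding q_def A.pi_def B.pi_def \<alpha>_def \<beta>_def a_def b_def ..
  have main: "good w x" if "0 \<le> c" "c^2 * \<alpha> * \<beta> \<le> 1" "(1 - w) * (c * \<beta> - 1) = 0" "w * (c * \<alpha> - 1) = 0" for c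
    using construct[OF w that(1)] that(2-4) unfolding \<alpha>_def \<beta>_def a_def b_def by blast
  consider "q w x = 0" | "w = 1" "0 \<le> q w x" | "w = 0" "q w x \<le> 0" using cases by blast
  then show ?thesis
  proof cases
    case 1
    then have "\<alpha> = \<beta>" using qab by simp
    then show ?thesis using main[of "1 / \<alpha>"] al by (simp add: power2_eq_square)
  next
    case 2
    then have "\<beta> \<le> \<alpha>" using qab by simp
    then have "(1 / \<alpha>)^2 * \<alpha> * \<beta> \<le> 1" using al by (simp add: power2_eq_square field_simps)
    then show ?thesis using main[of "1 / \<alpha>"] al 2 by simp
  next
    case 3
    then have "\<alpha> \<le> \<beta>" using qab by simp
    then have "(1 / \<beta>)^2 * \<alpha> * \<beta> \<le> 1" using be by (simp add: power2_eq_square field_simps)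
    then show ?thesis using main[of "1 / \<beta>"] be 3 by simp
  qed
qed

definition g :: "real^'n \<Rightarrow> real" where "g x = g_fun PA PB QA QB x"

lemma g_eq: "g x = (INF P\<in>A_Split PA PB. x \<bullet> (matrix_inv (Cf P) *v x))"
  unfolding g_def g_fun_def M_F_opt_def Cf_def ..

lemma g_ge: "0 \<le> w \<Longrightarrow> w \<le> 1 \<Longrightarrow> h w x \<le> g x"
  unfolding g_eq using zero_in_split cons by (intro cINF_greatest) auto

lemma g_le: "good w x \<Longrightarrow> g x \<le> h w x"
proof -
  assume "good w x"
  then obtain P where P: "P \<in> A_Split PA PB" "x \<bullet> (matrix_inv (Cf P) *v x) \<le> h w x" unfolding good_def by blast
  have "bdd_below ((\<lambda>P. x \<bullet> (matrix_inv (Cf P) *v x)) ` A_Split PA PB)"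
    using cons[of _ 0 x] by (intro bdd_belowI2[of _ "h 0 x"]) auto
  then show ?thesis unfolding g_eq using P by (intro cINF_lower2) auto
qed

end


lemma quad_root2:
  fixes \<alpha> \<beta> \<gamma> d :: real
  assumes "\<alpha> \<noteq> 0" "d^2 = \<beta>^2 - \<alpha> * \<gamma>"
  shows "\<alpha> * ((- \<beta> + d) / \<alpha>)^2 + 2 * \<beta> * ((- \<beta> + d) / \<alpha>) + \<gamma> = 0"
proof -
  have "\<alpha> * ((- \<beta> + d) / \<alpha>)^2 + 2 * \<beta> * ((- \<beta> + d) / \<alpha>) + \<gamma> = ((- \<beta> + d)^2 + 2 * \<beta> * (- \<beta> + d) + \<alpha> * \<gamma>) / \<alpha>"
    using assms(1) by (simp add: field_simps power2_eq_square)
  also have "(- \<beta> + d)^2 + 2 * \<beta> * (- \<beta> + d) + \<alpha> * \<gamma> = d^2 - \<beta>^2 + \<alpha> * \<gamma>"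
    by (simp add: power2_eq_square algebra_simps)
  also have "\<dots> = 0" using assms(2) by simp
  finally show ?thesis by simp
qed

lemma span_pair:
  fixes N D :: "real^'n^'n"
  assumes N: "sym_mat N" and Ds: "sym_mat D" and Dp: "\<forall>x. 0 \<le> x \<bullet> (D *v x)"
    and a: "a \<bullet> (N *v a) > 0" and b: "b \<bullet> (N *v b) < 0"
    and hyp: "\<forall>x. x \<bullet> (N *v x) = 0 \<longrightarrow> x \<bullet> (D *v x) \<le> 0"
  shows "D *v b = 0 \<and> D *v a = 0"
proof -
  define \<alpha> where "\<alpha> = b \<bullet> (N *v b)"
  define \<beta> where "\<beta> = b \<bullet> (N *v a)"
  define \<gamma> where "\<gamma> = a \<bullet> (N *v a)"
  have al: "\<alpha> \<noteq> 0" using b unfolding \<alpha>_def by simp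
  have pos: "0 < \<beta>^2 - \<alpha> * \<gamma>"
  proof -
    have "\<alpha> * \<gamma> < 0" using a b unfolding \<alpha>_def \<gamma>_def by (simp add: mult_neg_pos)
    then show ?thesis by (smt (verit) zero_le_power2)
  qed
  define d where "d = sqrt (\<beta>^2 - \<alpha> * \<gamma>)"
  have d2: "d^2 = \<beta>^2 - \<alpha> * \<gamma>" "(- d)^2 = \<beta>^2 - \<alpha> * \<gamma>" unfolding d_def using pos by simp_all
  have dpos: "d > 0" unfolding d_def using pos by simp
  have kernel: "D *v (r *\<^sub>R b + a) = 0" if r: "\<alpha> * r^2 + 2 * \<beta> * r + \<gamma> = 0" for r
  proof -
    have "(r *\<^sub>R b + a) \<bullet> (N *v (r *\<^sub>R b + a)) = 0"
      unfolding quad_expand[OF N] using r unfolding \<alpha>_def \<beta>_def \<gamma>_def by (simp add: algebra_simps)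
    then have "(r *\<^sub>R b + a) \<bullet> (D *v (r *\<^sub>R b + a)) = 0"
      using hyp Dp by (meson order_antisym)
    then show ?thesis by (rule psd_kernel[OF Ds Dp])
  qed
  define r1 where "r1 = (- \<beta> + d) / \<alpha>"
  define r2 where "r2 = (- \<beta> + (- d)) / \<alpha>"
  have k1: "D *v (r1 *\<^sub>R b + a) = 0" unfolding r1_def by (rule kernel[OF quad_root2[OF al d2(1)]])
  have k2: "D *v (r2 *\<^sub>R b + a) = 0" unfolding r2_def by (rule kernel[OF quad_root2[OF al d2(2)]])
  have "r1 \<noteq> r2" unfolding r1_def r2_def using al dpos by (simp add: field_simps)
  have "(r1 - r2) *\<^sub>R (D *v b) = D *v (r1 *\<^sub>R b + a) - D *v (r2 *\<^sub>R b + a)"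
    by (simp add: matrix_vector_right_distrib matrix_vector_mult_scaleR algebra_simps)
  then have "(r1 - r2) *\<^sub>R (D *v b) = 0" using k1 k2 by simp
  then have Db: "D *v b = 0" using \<open>r1 \<noteq> r2\<close> by simp
  then have "D *v a = 0" using k1 by (simp add: matrix_vector_right_distrib matrix_vector_mult_scaleR)
  then show ?thesis using Db by simp
qed

lemma span_lemma:
  fixes N D :: "real^'n^'n"
  assumes N: "sym_mat N" and Ds: "sym_mat D" and Dp: "\<forall>x. 0 \<le> x \<bullet> (D *v x)"
    and e: "e \<bullet> (N *v e) > 0" and f: "f \<bullet> (N *v f) < 0"
    and hyp: "\<forall>x. x \<bullet> (N *v x) = 0 \<longrightarrow> x \<bullet> (D *v x) \<le> 0"
  shows "v \<bullet> (D *v v) \<le> 0"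
proof -
  consider "v \<bullet> (N *v v) = 0" | "v \<bullet> (N *v v) > 0" | "v \<bullet> (N *v v) < 0" by linarith
  then show ?thesis
  proof cases
    case 1 then show ?thesis using hyp by blast
  next
    case 2 then have "D *v v = 0" using span_pair[OF N Ds Dp 2 f hyp] by blast
    then show ?thesis by simp
  next
    case 3 then have "D *v v = 0" using span_pair[OF N Ds Dp e 3 hyp] by blast
    then show ?thesis by simp
  qed
qed

lemma ell_sub:
  fixes A B :: "real^'n^'n"
  assumes A: "spd A" and B: "spd B" and sub: "{x. x \<bullet> (A *v x) \<le> 1} \<subseteq> {x. x \<bullet> (B *v x) \<le> 1}"
  shows "x \<bullet> (B *v x) \<le> x \<bullet> (A *v x)"
proof (cases "x = 0")
  case True then show ?thesis by simp
next
  case False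
  define t where "t = x \<bullet> (A *v x)"
  have t: "t > 0" unfolding t_def using spd_pos[OF A False] .
  define y where "y = (1 / sqrt t) *\<^sub>R x"
  have sc: "y \<bullet> (M *v y) = (x \<bullet> (M *v x)) / t" for M :: "real^'n^'n"
    unfolding y_def using t by (simp add: matrix_vector_mult_scaleR power2_eq_square[symmetric])
  have "y \<bullet> (A *v y) \<le> 1" unfolding sc t_def[symmetric] using t by simp
  then have "y \<bullet> (B *v y) \<le> 1" using sub by blast
  then have "x \<bullet> (B *v x) / t \<le> 1" unfolding sc .
  then show ?thesis using t unfolding t_def[symmetric] by (simp add: field_simps)
qed

context sci
begin

lemma swap_H: "H_SCI PB PA QB QA s = H_SCI PA PB QA QB (1 - s)"
  by (simp add: H_SCI_def add.commute)

lemma L_nd: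
  assumes w: "0 < w" "w \<le> 1" and neg: "\<forall>x. x \<noteq> 0 \<longrightarrow> q w x < 0"
  shows "\<exists>w2. 0 \<le> w2 \<and> w2 < w \<and> (\<forall>x. x \<noteq> 0 \<longrightarrow> h w x < h w2 x)"
proof -
  interpret sw: sci PB PA QB QA using PA PB QA QB by unfold_locales
  have hq: "sw.q s x = - q (1 - s) x" for s x unfolding sw.q_def q_def by simp
  have hh: "sw.h s x = h (1 - s) x" for s x unfolding sw.h_def h_def sw.H_def H_def swap_H ..
  have "\<forall>x. x \<noteq> 0 \<longrightarrow> sw.q (1 - w) x > 0" using neg hq by simp
  then obtain w2 where w2: "1 - w < w2" "w2 \<le> 1" "\<forall>x. x \<noteq> 0 \<longrightarrow> sw.h (1 - w) x < sw.h w2 x"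
    using sw.L_pd[of "1 - w"] w by auto
  show ?thesis
  proof (intro exI[of _ "1 - w2"] conjI allI impI)
    show "0 \<le> 1 - w2" "1 - w2 < w" using w2 by auto
    fix x :: "real^'n" assume "x \<noteq> 0"
    then show "h w x < h (1 - w2) x" using w2(3) hh by simp
  qed
qed

lemma quartic_down:
  assumes w: "0 < w" "w \<le> 1"
    and qnsd: "\<forall>x. q w x \<le> 0"
    and x1: "q w x1 = 0" and x1nz: "x1 \<noteq> 0"
    and Dsym: "sym_mat D" and Dpsd: "\<forall>x. 0 \<le> x \<bullet> (D *v x)" and Dx1: "D *v x1 = 0"
    and hyp: "\<forall>w2 x. 0 < w2 \<longrightarrow> w2 \<le> w \<longrightarrow> q w2 x = 0 \<longrightarrow> x \<bullet> (D *v x) \<le> h w2 x - h w x"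
  shows "v \<bullet> (D *v v) \<le> 0"
proof -
  interpret sw: sci PB PA QB QA using PA PB QA QB by unfold_locales
  have hq: "sw.q s x = - q (1 - s) x" for s x unfolding sw.q_def q_def by simp
  have hh: "sw.h s x = h (1 - s) x" for s x unfolding sw.h_def h_def sw.H_def H_def swap_H ..
  show ?thesis
  proof (rule sw.quartic_up[of "1 - w" x1 D v])
    show "0 \<le> 1 - w" "1 - w < 1" using w by auto
    show "\<forall>x. 0 \<le> sw.q (1 - w) x" using qnsd hq by simp
    show "sw.q (1 - w) x1 = 0" using x1 hq by simp
    show "x1 \<noteq> 0" "sym_mat D" "\<forall>x. 0 \<le> x \<bullet> (D *v x)" "D *v x1 = 0" by fact+
    show "\<forall>w2 x. 1 - w \<le> w2 \<longrightarrow> w2 < 1 \<longrightarrow> sw.q w2 x = 0 \<longrightarrow> x \<bullet> (D *v x) \<le> sw.h w2 x - sw.h (1 - w) x"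
    proof (intro allI impI)
      fix w2 x assume a: "1 - w \<le> w2" "w2 < 1" "sw.q w2 x = 0"
      have "x \<bullet> (D *v x) \<le> h (1 - w2) x - h w x" using hyp a hq by simp
      then show "x \<bullet> (D *v x) \<le> sw.h w2 x - sw.h (1 - w) x" using hh by simp
    qed
  qed
qed

end


context sci
begin

lemma H_inv: "0 \<le> w \<Longrightarrow> w \<le> 1 \<Longrightarrow> matrix_inv (B_SCI PA PB QA QB w) = H w"
  unfolding B_SCI_def H_def[symmetric] using inv_inv[OF spd_invertible[OF H_spd]] by simp

lemma ell_B: "0 \<le> w \<Longrightarrow> w \<le> 1 \<Longrightarrow> ellipsoid (B_SCI PA PB QA QB w) = {x. h w x \<le> 1}"
  unfolding ellipsoid_def H_inv h_def by simp

lemma B_spd: "0 \<le> w \<Longrightarrow> w \<le> 1 \<Longrightarrow> spd (B_SCI PA PB QA QB w)"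
  unfolding B_SCI_def H_def[symmetric] by (rule spd_inv[OF H_spd])

lemma Vstar_eq: "V_star PA PB QA QB = (\<Union>P\<in>A_Split PA PB. {x. x \<bullet> (matrix_inv (Cf P) *v x) \<le> 1})"
  unfolding V_star_def ellipsoid_def Cf_def ..

lemma Vsub: "0 \<le> w \<Longrightarrow> w \<le> 1 \<Longrightarrow> V_star PA PB QA QB \<subseteq> ellipsoid (B_SCI PA PB QA QB w)"
proof -
  assume w: "0 \<le> w" "w \<le> 1"
  show ?thesis
  proof
    fix x assume "x \<in> V_star PA PB QA QB"
    then obtain P where P: "P \<in> A_Split PA PB" "x \<bullet> (matrix_inv (Cf P) *v x) \<le> 1"
      unfolding Vstar_eq by blast
    have "h w x \<le> 1" using cons[OF P(1) w, of x] P(2) by linarith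
    then show "x \<in> ellipsoid (B_SCI PA PB QA QB w)" unfolding ell_B[OF w] by simp
  qed
qed

lemma nonzero_vec: "\<exists>x::real^'n. x \<noteq> 0"
proof -
  obtain i :: 'n where True by blast
  have "axis i (1::real) \<noteq> 0" by (simp add: axis_eq_0_iff)
  then show ?thesis by blast
qed

lemma not_tight:
  assumes w: "0 \<le> w" "w \<le> 1" and w2: "0 \<le> w2" "w2 \<le> 1" and lt: "\<forall>x. x \<noteq> 0 \<longrightarrow> h w x < h w2 x"
  shows "\<not> tightly_circumscribes (B_SCI PA PB QA QB w) (V_star PA PB QA QB)"
proof
  assume t: "tightly_circumscribes (B_SCI PA PB QA QB w) (V_star PA PB QA QB)"
  define Q where "Q = B_SCI PA PB QA QB w2"
  have "spd Q" unfolding Q_def using B_spd w2 by simp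
  moreover have "V_star PA PB QA QB \<subseteq> ellipsoid Q" unfolding Q_def using Vsub w2 by simp
  moreover have "ellipsoid Q \<subseteq> ellipsoid (B_SCI PA PB QA QB w)"
  proof -
    have "h w x \<le> h w2 x" for x using lt by (cases "x = 0") (auto simp: h_def less_imp_le)
    then show ?thesis unfolding Q_def ell_B[OF w] ell_B[OF w2] by (auto intro: order_trans)
  qed
  ultimately have "Q = B_SCI PA PB QA QB w" using t unfolding tightly_circumscribes_def by blast
  then have "H w2 = H w" using H_inv[OF w] H_inv[OF w2] unfolding Q_def by metis
  moreover obtain x :: "real^'n" where "x \<noteq> 0" using nonzero_vec by blast
  ultimately show False using lt unfolding h_def by auto
qed

lemma not_touch:
  assumes w: "0 \<le> w" "w \<le> 1" and w2: "0 \<le> w2" "w2 \<le> 1" and lt: "\<forall>x. x \<noteq> 0 \<longrightarrow> h w x < h w2 x"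
  shows "\<not> (\<exists>x. x \<noteq> 0 \<and> g x = h w x)"
proof
  assume "\<exists>x. x \<noteq> 0 \<and> g x = h w x"
  then obtain x where x: "x \<noteq> 0" "g x = h w x" by blast
  have "h w2 x \<le> g x" by (rule g_ge[OF w2])
  then show False using x lt by fastforce
qed

lemma tight_from:
  assumes w: "0 \<le> w" "w \<le> 1"
    and key: "\<And>D. sym_mat D \<Longrightarrow> (\<forall>x. 0 \<le> x \<bullet> (D *v x)) \<Longrightarrow>
       (\<forall>w2 x. 0 \<le> w2 \<longrightarrow> w2 \<le> 1 \<longrightarrow> good w2 x \<longrightarrow> x \<bullet> (D *v x) \<le> h w2 x - h w x) \<Longrightarrow>
       (\<forall>v. v \<bullet> (D *v v) \<le> 0)"
  shows "tightly_circumscribes (B_SCI PA PB QA QB w) (V_star PA PB QA QB)"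
  unfolding tightly_circumscribes_def
proof (intro conjI allI impI)
  show "V_star PA PB QA QB \<subseteq> ellipsoid (B_SCI PA PB QA QB w)" using Vsub w .
  fix Q :: "real^'n^'n"
  assume Q: "spd Q" and VQ: "V_star PA PB QA QB \<subseteq> ellipsoid Q"
    and QB': "ellipsoid Q \<subseteq> ellipsoid (B_SCI PA PB QA QB w)"
  define Qi where "Qi = matrix_inv Q"
  have Qi: "spd Qi" unfolding Qi_def using spd_inv[OF Q] .
  have HQ: "x \<bullet> (H w *v x) \<le> x \<bullet> (Qi *v x)" for x
  proof (rule ell_sub[OF Qi H_spd[OF w]])
    have "ellipsoid Q = {x. x \<bullet> (Qi *v x) \<le> 1}" unfolding ellipsoid_def Qi_def ..
    then show "{x. x \<bullet> (Qi *v x) \<le> 1} \<subseteq> {x. x \<bullet> (H w *v x) \<le> 1}"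
      using QB' unfolding ell_B[OF w] h_def by simp
  qed
  define D where "D = Qi - H w"
  have Ds: "sym_mat D" unfolding D_def using spd_sym[OF Qi] spd_sym[OF H_spd[OF w]] by (rule sym_diff)
  have Dx: "x \<bullet> (D *v x) = x \<bullet> (Qi *v x) - h w x" for x
    unfolding D_def h_def by (simp add: matrix_vector_mult_diff_rdistrib inner_diff_right)
  have Dp: "\<forall>x. 0 \<le> x \<bullet> (D *v x)" using HQ Dx h_def by simp
  have Db: "\<forall>w2 x. 0 \<le> w2 \<longrightarrow> w2 \<le> 1 \<longrightarrow> good w2 x \<longrightarrow> x \<bullet> (D *v x) \<le> h w2 x - h w x"
  proof (intro allI impI)
    fix w2 x assume a: "0 \<le> w2" "w2 \<le> 1" "good w2 x"
    then obtain P where P: "P \<in> A_Split PA PB" "x \<bullet> (matrix_inv (Cf P) *v x) \<le> h w2 x"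
      unfolding good_def by blast
    have "x \<bullet> (Qi *v x) \<le> x \<bullet> (matrix_inv (Cf P) *v x)"
    proof (rule ell_sub[OF spd_inv[OF Cf_spd[OF P(1)]] Qi])
      show "{x. x \<bullet> (matrix_inv (Cf P) *v x) \<le> 1} \<subseteq> {x. x \<bullet> (Qi *v x) \<le> 1}"
        using VQ P(1) unfolding Vstar_eq ellipsoid_def Qi_def by blast
    qed
    then show "x \<bullet> (D *v x) \<le> h w2 x - h w x" using P(2) Dx by simp
  qed
  have "\<forall>v. v \<bullet> (D *v v) \<le> 0" by (rule key[OF Ds Dp Db])
  then have "\<forall>v. D *v v = 0" using psd_kernel[OF Ds Dp] Dp by (meson order_antisym)
  then have "D = 0" by (simp add: matrix_eq)
  then have "Qi = H w" unfolding D_def by simp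
  then have "Q = matrix_inv (H w)" unfolding Qi_def using inv_inv[OF spd_invertible[OF Q]] by metis
  then show "Q = B_SCI PA PB QA QB w" unfolding B_SCI_def H_def .
qed

end


context sci
begin

theorem main:
  assumes w: "0 \<le> w" "w \<le> 1"
  shows "tightly_circumscribes (B_SCI PA PB QA QB w) (V_star PA PB QA QB) \<longleftrightarrow> (\<exists>x. x \<noteq> 0 \<and> g x = h w x)"
proof -
  have G: "good w2 x" if "0 \<le> w2" "w2 \<le> 1" "q w2 x = 0 \<or> (w2 = 1 \<and> 0 \<le> q w2 x) \<or> (w2 = 0 \<and> q w2 x \<le> 0)" for w2 x
    using good_cases that by blast
  have T: "\<exists>x. x \<noteq> 0 \<and> g x = h w x" if "good w x" "x \<noteq> 0" for x
    using g_le[OF that(1)] g_ge[OF w, of x] that(2) by force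
  obtain e0 :: "real^'n" where e0: "e0 \<noteq> 0" using nonzero_vec by blast
  have Nw: "sym_mat (Nq w)" using Nq_sym w by simp
  have qN: "q w x = x \<bullet> (Nq w *v x)" for x using q_Nq w by simp
  show ?thesis
  proof
    assume tight: "tightly_circumscribes (B_SCI PA PB QA QB w) (V_star PA PB QA QB)"
    show "\<exists>x. x \<noteq> 0 \<and> g x = h w x"
    proof (rule ccontr)
      assume nt: "\<not> (\<exists>x. x \<noteq> 0 \<and> g x = h w x)"
      then have ng: "\<not> good w x" if "x \<noteq> 0" for x using T that by blast
      have defi: "(\<forall>x. x \<noteq> 0 \<longrightarrow> q w x > 0) \<or> (\<forall>x. x \<noteq> 0 \<longrightarrow> q w x < 0)"
      proof (rule ccontr)
        assume "\<not> ?thesis"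
        then obtain x1 x2 where x1: "x1 \<noteq> 0" "q w x1 \<le> 0" and x2: "x2 \<noteq> 0" "q w x2 \<ge> 0"
          by (auto simp: not_less)
        have x1n: "q w x1 < 0" using x1 ng[OF x1(1)] G[OF w, of x1] by (metis order_le_less)
        have x2p: "q w x2 > 0" using x2 ng[OF x2(1)] G[OF w, of x2] by (metis order_le_less)
        have "q w x1 * q w x2 \<le> (x1 \<bullet> (Nq w *v x2))^2"
          using x1n x2p by (smt (verit) mult_neg_pos zero_le_power2)
        then obtain r where r: "q w x1 * r^2 + 2 * (x1 \<bullet> (Nq w *v x2)) * r + q w x2 = 0"
          using quad_root[of "q w x1" "q w x2" "x1 \<bullet> (Nq w *v x2)"] x1n by auto
        define y where "y = r *\<^sub>R x1 + x2"
        have qy: "q w y = 0" unfolding y_def qN quad_expand[OF Nw] using r qN by (simp add: algebra_simps)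
        have "y \<noteq> 0"
        proof
          assume "y = 0"
          then have "x2 = - (r *\<^sub>R x1)" unfolding y_def by (simp add: eq_neg_iff_add_eq_0 add.commute)
          then have "q w x2 = r^2 * q w x1" unfolding qN
            by (simp add: mv_neg matrix_vector_mult_scaleR power2_eq_square)
          then show False using x1n x2p by (smt (verit) mult_nonneg_nonpos zero_le_power2)
        qed
        then show False using ng G[OF w] qy by blast
      qed
      then show False
      proof
        assume pos: "\<forall>x. x \<noteq> 0 \<longrightarrow> q w x > 0"
        have "w \<noteq> 1" using pos e0 ng[OF e0] G[of 1 e0] by force
        then have "w < 1" using w by simp
        then obtain w2 where "w < w2" "w2 \<le> 1" "\<forall>x. x \<noteq> 0 \<longrightarrow> h w x < h w2 x" using L_pd w pos by blast
        then show False using not_tight[OF w, of w2] tight w by auto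
      next
        assume neg: "\<forall>x. x \<noteq> 0 \<longrightarrow> q w x < 0"
        have "w \<noteq> 0" using neg e0 ng[OF e0] G[of 0 e0] by force
        then have "0 < w" using w by simp
        then obtain w2 where "0 \<le> w2" "w2 < w" "\<forall>x. x \<noteq> 0 \<longrightarrow> h w x < h w2 x" using L_nd w neg by blast
        then show False using not_tight[OF w, of w2] tight w by auto
      qed
    qed
  next
    assume "\<exists>x. x \<noteq> 0 \<and> g x = h w x"
    then obtain x0 where x0: "x0 \<noteq> 0" "g x0 = h w x0" by blast
    have nopd: "\<not> (w < 1 \<and> (\<forall>x. x \<noteq> 0 \<longrightarrow> q w x > 0))"
    proof
      assume "w < 1 \<and> (\<forall>x. x \<noteq> 0 \<longrightarrow> q w x > 0)"
      then obtain w2 where "w < w2" "w2 \<le> 1" "\<forall>x. x \<noteq> 0 \<longrightarrow> h w x < h w2 x" using L_pd w by blast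
      then show False using not_touch[OF w, of w2] x0 w by auto
    qed
    have nond: "\<not> (0 < w \<and> (\<forall>x. x \<noteq> 0 \<longrightarrow> q w x < 0))"
    proof
      assume "0 < w \<and> (\<forall>x. x \<noteq> 0 \<longrightarrow> q w x < 0)"
      then obtain w2 where "0 \<le> w2" "w2 < w" "\<forall>x. x \<noteq> 0 \<longrightarrow> h w x < h w2 x" using L_nd w by blast
      then show False using not_touch[OF w, of w2] x0 w by auto
    qed
    show "tightly_circumscribes (B_SCI PA PB QA QB w) (V_star PA PB QA QB)"
    proof (rule tight_from[OF w])
      fix D :: "real^'n^'n"
      assume Ds: "sym_mat D" and Dp: "\<forall>x. 0 \<le> x \<bullet> (D *v x)"
        and hyp: "\<forall>w2 x. 0 \<le> w2 \<longrightarrow> w2 \<le> 1 \<longrightarrow> good w2 x \<longrightarrow> x \<bullet> (D *v x) \<le> h w2 x - h w x"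
      have hyp0: "\<forall>x. q w x = 0 \<longrightarrow> x \<bullet> (D *v x) \<le> 0"
        using hyp G[OF w] w by fastforce
      have ker: "D *v x = 0" if "q w x = 0" for x
        using psd_kernel[OF Ds Dp] hyp0 Dp that by (meson order_antisym)
      show "\<forall>v. v \<bullet> (D *v v) \<le> 0"
      proof (cases "(\<exists>e. q w e > 0) \<and> (\<exists>f. q w f < 0)")
        case True
        then obtain e f where ef: "q w e > 0" "q w f < 0" by blast
        show ?thesis
        proof
          fix v
          show "v \<bullet> (D *v v) \<le> 0"
            by (rule span_lemma[OF Nw Ds Dp]) (use ef hyp0 qN in auto)
        qed
      next
        case False
        then have "(\<forall>x. 0 \<le> q w x) \<or> (\<forall>x. q w x \<le> 0)" by (auto simp: not_less)
        then show ?thesis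
        proof
          assume psd: "\<forall>x. 0 \<le> q w x"
          show ?thesis
          proof (cases "w = 1")
            case True
            show ?thesis
            proof
              fix v
              have "good w v" using G[OF w, of v] psd True by blast
              then show "v \<bullet> (D *v v) \<le> 0" using hyp w by fastforce
            qed
          next
            case False
            then have w1: "w < 1" using w by simp
            then obtain x1 where x1: "x1 \<noteq> 0" "\<not> q w x1 > 0" using nopd by blast
            then have qx1: "q w x1 = 0" using psd by (metis order_le_less)
            show ?thesis
            proof
              fix v
              show "v \<bullet> (D *v v) \<le> 0"
              proof (rule quartic_up[OF w(1) w1 psd qx1 x1(1) Ds Dp ker[OF qx1]])
                show "\<forall>w2 x. w \<le> w2 \<longrightarrow> w2 < 1 \<longrightarrow> q w2 x = 0 \<longrightarrow> x \<bullet> (D *v x) \<le> h w2 x - h w x"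
                  using hyp G w by (meson order_trans less_imp_le)
              qed
            qed
          qed
        next
          assume nsd: "\<forall>x. q w x \<le> 0"
          show ?thesis
          proof (cases "w = 0")
            case True
            show ?thesis
            proof
              fix v
              have "good w v" using G[OF w, of v] nsd True by blast
              then show "v \<bullet> (D *v v) \<le> 0" using hyp w by fastforce
            qed
          next
            case False
            then have w0: "0 < w" using w by simp
            then obtain x1 where x1: "x1 \<noteq> 0" "\<not> q w x1 < 0" using nond by blast
            then have qx1: "q w x1 = 0" using nsd by (metis order_le_less)
            show ?thesis
            proof
              fix v
              show "v \<bullet> (D *v v) \<le> 0"
              proof (rule quartic_down[OF w0 w(2) nsd qx1 x1(1) Ds Dp ker[OF qx1]])
                show "\<forall>w2 x. 0 < w2 \<longrightarrow> w2 \<le> w \<longrightarrow> q w2 x = 0 \<longrightarrow> x \<bullet> (D *v x) \<le> h w2 x - h w x"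
                  using hyp G w by (meson order_trans less_imp_le)
              qed
            qed
          qed
        qed
      qed
    qed
  qed
qed

end

theorem theorem4:
  fixes PA PB QA QB :: "real^'n^'n" and w1 :: real
  assumes "spd PA" and "spd PB" and "spd QA" and "spd QB"
    and "0 \<le> w1" and "w1 \<le> 1"
  shows "tightly_circumscribes (B_SCI PA PB QA QB w1) (V_star PA PB QA QB) \<longleftrightarrow>
    (\<exists>x. x \<noteq> 0 \<and> g_fun PA PB QA QB x = x \<bullet> (H_SCI PA PB QA QB w1 *v x))"
proof -
  interpret sci PA PB QA QB using assms(1-4) by unfold_locales
  show ?thesis using main[OF assms(5,6)] unfolding g_def h_def H_def .
qed


end
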